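(* Let $\rho$ be a mixed memory over a set $Y$ of program variables and let $X\subseteq Y$. Let $\mathbf{u}$ be a fresh unentangled ghost of the same type as $X$ and define $\mathrm{separable}(X) := (X\equiv_q\mathbf{u})$. Then $\rho\models\mathrm{separable}(X)$ iff $\rho$ is $(X,Y\setminus X)$-separable.
   Context: Variables have types and are of three disjoint kinds: program variables, entangled ghosts, unentangled ghosts. $\ell^2[V]$ is the Hilbert space with orthonormal basis indexed by assignments on $V$; $\ell^2[V\cup W]\cong\ell^2[V]\otimes\ell^2[W]$. Mixed memories over $V$ are positive trace-class operators on $\ell^2[V]$; $\mathrm{tr}_W$ is partial trace. A mixed memory over $V\cup W$ is $(V,W)$-separable if it is a convergent sum $\sum_i\rho_i\otimes\rho_i'$ of mixed memories over $V$ and $W$. $\mathrm{supp}\,\rho$ is the closure of the range of $\rho$. A predicate over $V$ is a closed subspace of $\ell^2[V]$; predicates over different variable sets are identified if they agree after tensoring with the full spaces of missing variables. Quantum equality: for disjoint lists $W,W'\subseteq V$ of the same type $T$, let $\mathrm{SWAP}$ be the unitary with $\mathrm{SWAP}(|i\rangle_W\otimes|j\rangle_{W'}\otimes\psi'')=|j\rangle_W\otimes|i\rangle_{W'}\otimes\psi''$; then $W\equiv_q W'$ is the set of $\psi\in\ell^2[V]$ with $\mathrm{SWAP}\,\psi=\psi$. For program variables $X$, entangled ghosts $E$, unentangled ghosts $U$ and a predicate $A$ over $X\cup E\cup U$, a mixed memory $\rho$ over $X$ satisfies $A$ ($\rho\models A$) iff there exists an $(X\cup E,U)$-separable mixed memory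 $\rho^\circ$ over $X\cup E\cup U$ with $\mathrm{supp}\,\rho^\circ\subseteq A$ and $\mathrm{tr}_{E\cup U}\rho^\circ=\rho$. *)

theory Defs
  imports "HOL-Analysis.Analysis"
begin

text \<open>
  A set of variables V is represented by the
  type of its assignments; l2[V] is the space of square-summable functions on that type,
  and l2[V u W] = l2[V] (x) l2[W] becomes the product of index types.
  Operators on l2[V] are represented by their matrices in the computational basis,
  K x y = <x|rho|y>.
\<close>

definition is_ell2 :: "('a \<Rightarrow> complex) \<Rightarrow> bool" where
  "is_ell2 \<psi> \<longleftrightarrow> (\<lambda>x. (cmod (\<psi> x))\<^sup>2) summable_on UNIV"

definition ell2_norm :: "('a \<Rightarrow> complex) \<Rightarrow> real" where
  "ell2_norm \<psi> = sqrt (infsum (\<lambda>x. (cmod (\<psi> x))\<^sup>2) UNIV)"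

definition ell2_closure :: "('a \<Rightarrow> complex) set \<Rightarrow> ('a \<Rightarrow> complex) set" where
  "ell2_closure S = {\<phi>. is_ell2 \<phi> \<and> (\<forall>\<epsilon>>0. \<exists>\<psi>\<in>S. ell2_norm (\<lambda>x. \<phi> x - \<psi> x) < \<epsilon>)}"

definition op_apply :: "('a \<Rightarrow> 'a \<Rightarrow> complex) \<Rightarrow> ('a \<Rightarrow> complex) \<Rightarrow> ('a \<Rightarrow> complex)" where
  "op_apply K \<psi> = (\<lambda>x. infsum (\<lambda>y. K x y * \<psi> y) UNIV)"

text \<open>Mixed memory = positive trace-class operator: its matrix is positive semidefinite
  and the diagonal (the trace) is summable.\<close>
definition mixed_memory :: "('a \<Rightarrow> 'a \<Rightarrow> complex) \<Rightarrow> bool" where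
  "mixed_memory K \<longleftrightarrow>
     (\<forall>F \<psi>. finite F \<longrightarrow>
        Im (\<Sum>x\<in>F. \<Sum>y\<in>F. cnj (\<psi> x) * K x y * \<psi> y) = 0 \<and>
        Re (\<Sum>x\<in>F. \<Sum>y\<in>F. cnj (\<psi> x) * K x y * \<psi> y) \<ge> 0)
     \<and> (\<lambda>x. K x x) summable_on UNIV"

definition supp :: "('a \<Rightarrow> 'a \<Rightarrow> complex) \<Rightarrow> ('a \<Rightarrow> complex) set" where
  "supp K = ell2_closure {op_apply K \<psi> | \<psi>. is_ell2 \<psi>}"

definition tensor_op :: "('a \<Rightarrow> 'a \<Rightarrow> complex) \<Rightarrow> ('b \<Rightarrow> 'b \<Rightarrow> complex)
    \<Rightarrow> ('a \<times> 'b \<Rightarrow> 'a \<times> 'b \<Rightarrow> complex)" where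
  "tensor_op K L = (\<lambda>(a, b) (a', b'). K a a' * L b b')"

definition separable :: "('a \<times> 'b \<Rightarrow> 'a \<times> 'b \<Rightarrow> complex) \<Rightarrow> bool" where
  "separable \<sigma> \<longleftrightarrow>
     (\<exists>(\<rho>s :: nat \<Rightarrow> 'a \<Rightarrow> 'a \<Rightarrow> complex) (\<rho>s' :: nat \<Rightarrow> 'b \<Rightarrow> 'b \<Rightarrow> complex).
        (\<forall>i. mixed_memory (\<rho>s i) \<and> mixed_memory (\<rho>s' i)) \<and>
        (\<forall>p q. ((\<lambda>i. tensor_op (\<rho>s i) (\<rho>s' i) p q) has_sum \<sigma> p q) UNIV))"

text \<open>Satisfaction: program variables 'p, entangled ghosts 'e, unentangled ghosts 'u;
  the predicate A is a set of vectors over ('p x 'e) x 'u.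
  The partial trace over E u U is written out entrywise.\<close>
definition qsat :: "('p \<Rightarrow> 'p \<Rightarrow> complex) \<Rightarrow> (('p \<times> 'e) \<times> 'u \<Rightarrow> complex) set \<Rightarrow> bool" where
  "qsat \<rho> A \<longleftrightarrow>
     (\<exists>\<sigma> :: ('p \<times> 'e) \<times> 'u \<Rightarrow> ('p \<times> 'e) \<times> 'u \<Rightarrow> complex.
        mixed_memory \<sigma> \<and> separable \<sigma> \<and> supp \<sigma> \<subseteq> A \<and>
        (\<forall>p p'. ((\<lambda>(e, u). \<sigma> ((p, e), u) ((p', e), u)) has_sum \<rho> p p') UNIV))"

text \<open>SWAP of the program variables X (index type 'x) with the ghost u (same type 'x),
  acting on l2[X u (Y-X) u E u {u}], and the quantum equality X ==q u.\<close>
definition swap_Xu :: "(((('x \<times> 'r) \<times> 'e) \<times> 'x) \<Rightarrow> complex) \<Rightarrow> (((('x \<times> 'r) \<times> 'e) \<times> 'x) \<Rightarrow> complex)" where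
  "swap_Xu \<psi> = (\<lambda>(((x, r), e), u). \<psi> (((u, r), e), x))"

definition separable_pred :: "(((('x \<times> 'r) \<times> 'e) \<times> 'x) \<Rightarrow> complex) set" where
  "separable_pred = {\<psi>. is_ell2 \<psi> \<and> swap_Xu \<psi> = \<psi>}"

end

theory Submission
  imports Defs "HOL-Analysis.Analysis"
begin


definition Bf :: "'a set \<Rightarrow> ('a\<Rightarrow>'a\<Rightarrow>complex) \<Rightarrow> ('a\<Rightarrow>complex) \<Rightarrow> ('a\<Rightarrow>complex) \<Rightarrow> complex" where
  "Bf F K \<phi> \<psi> = (\<Sum>x\<in>F. \<Sum>y\<in>F. cnj (\<phi> x) * K x y * \<psi> y)"

definition psd :: "('a\<Rightarrow>'a\<Rightarrow>complex) \<Rightarrow> bool" where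
  "psd K \<longleftrightarrow> (\<forall>F \<psi>. finite F \<longrightarrow> Im (Bf F K \<psi> \<psi>) = 0 \<and> Re (Bf F K \<psi> \<psi>) \<ge> 0)"

lemma mixed_memory_psd: "mixed_memory K \<longleftrightarrow> psd K \<and> (\<lambda>x. K x x) summable_on UNIV"
  unfolding mixed_memory_def psd_def Bf_def by blast

lemma Bf_expand:
  "Bf F K (\<lambda>x. \<phi> x + c * \<psi> x) (\<lambda>x. \<phi> x + c * \<psi> x) =
   Bf F K \<phi> \<phi> + c * Bf F K \<phi> \<psi> + cnj c * Bf F K \<psi> \<phi> + (c * cnj c) * Bf F K \<psi> \<psi>"
  unfolding Bf_def
  apply (simp add: sum_distrib_left sum.distrib[symmetric])
  apply (intro sum.cong refl)
  by (simp add: ring_distribs mult_ac add_ac)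

lemma psdD: "psd K \<Longrightarrow> finite F \<Longrightarrow> Im (Bf F K \<psi> \<psi>) = 0"
  "psd K \<Longrightarrow> finite F \<Longrightarrow> Re (Bf F K \<psi> \<psi>) \<ge> 0"
  unfolding psd_def by auto

lemma psd_herm_form:
  assumes "psd K" "finite F"
  shows "Bf F K \<psi> \<phi> = cnj (Bf F K \<phi> \<psi>)"
proof -
  have 1: "Im (Bf F K \<phi> \<phi> + 1 * Bf F K \<phi> \<psi> + cnj 1 * Bf F K \<psi> \<phi> + (1 * cnj 1) * Bf F K \<psi> \<psi>) = 0"
    using psdD(1)[OF assms, of "\<lambda>x. \<phi> x + 1 * \<psi> x"] by (simp only: Bf_expand)
  have 2: "Im (Bf F K \<phi> \<phi> + \<i> * Bf F K \<phi> \<psi> + cnj \<i> * Bf F K \<psi> \<phi> + (\<i> * cnj \<i>) * Bf F K \<psi> \<psi>) = 0"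
    using psdD(1)[OF assms, of "\<lambda>x. \<phi> x + \<i> * \<psi> x"] by (simp only: Bf_expand)
  have a: "Im (Bf F K \<phi> \<phi>) = 0" "Im (Bf F K \<psi> \<psi>) = 0" using psdD(1)[OF assms] by auto
  show ?thesis using 1 2 a by (simp add: complex_eq_iff)
qed

lemma real_quad_aux:
  fixes a B d :: real
  assumes "\<And>t. a - 2 * t * B + t\<^sup>2 * B * d \<ge> 0" "B \<ge> 0" "a \<ge> 0" "d \<ge> 0"
  shows "B \<le> a * d"
proof (cases "B = 0")
  case True then show ?thesis using assms by simp
next
  case False
  then have Bp: "B > 0" using assms by simp
  show ?thesis
  proof (cases "d = 0")
    case True
    have "a - 2 * ((a+1)/(2*B)) * B + ((a+1)/(2*B))\<^sup>2 * B * d \<ge> 0" by (rule assms(1))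
    then have "a - (a+1) \<ge> 0" using True Bp by (simp add: field_simps)
    then show ?thesis by simp
  next
    case False
    then have dp: "d > 0" using assms by simp
    have "a - 2 * (1/d) * B + (1/d)\<^sup>2 * B * d \<ge> 0" by (rule assms(1))
    then have "a - B/d \<ge> 0" using dp by (simp add: field_simps power2_eq_square)
    then show ?thesis using dp by (simp add: field_simps)
  qed
qed

lemma Re_expand_aux:
  fixes a b d :: complex and t :: real
  assumes "Im a = 0" "Im d = 0"
  shows "Re (a + (- (of_real t * cnj b)) * b + cnj (- (of_real t * cnj b)) * cnj b + ((- (of_real t * cnj b)) * cnj (- (of_real t * cnj b))) * d)
     = Re a - 2 * t * (cmod b)\<^sup>2 + t\<^sup>2 * (cmod b)\<^sup>2 * Re d"
proof -
  have e: "cnj b * b = of_real ((cmod b)\<^sup>2)" by (metis complex_norm_square mult.commute)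
  have "a + (- (of_real t * cnj b)) * b + cnj (- (of_real t * cnj b)) * cnj b + ((- (of_real t * cnj b)) * cnj (- (of_real t * cnj b))) * d
     = a - 2 * of_real t * (cnj b * b) + (of_real t)^2 * (cnj b * b) * d"
    by (simp add: power2_eq_square mult_ac)
  also have "\<dots> = a - of_real (2 * t * (cmod b)\<^sup>2) + of_real (t\<^sup>2 * (cmod b)\<^sup>2) * d"
    unfolding e by simp
  finally have eq: "a + (- (of_real t * cnj b)) * b + cnj (- (of_real t * cnj b)) * cnj b + ((- (of_real t * cnj b)) * cnj (- (of_real t * cnj b))) * d
     = a - of_real (2 * t * (cmod b)\<^sup>2) + of_real (t\<^sup>2 * (cmod b)\<^sup>2) * d" .
  have r: "\<And>X Y. Re (a - of_real X + of_real Y * d) = Re a - X + Y * Re d" by simp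
  show ?thesis unfolding eq r ..
qed
lemma psd_CS:
  assumes "psd K" "finite F"
  shows "(cmod (Bf F K \<phi> \<psi>))\<^sup>2 \<le> Re (Bf F K \<phi> \<phi>) * Re (Bf F K \<psi> \<psi>)"
proof -
  define b where "b = Bf F K \<phi> \<psi>"
  have h: "Bf F K \<psi> \<phi> = cnj b" unfolding b_def by (rule psd_herm_form[OF assms])
  have a: "Im (Bf F K \<phi> \<phi>) = 0" "Im (Bf F K \<psi> \<psi>) = 0" by (rule psdD(1)[OF assms])+
  have "\<And>t::real. Re (Bf F K \<phi> \<phi>) - 2 * t * (cmod b)\<^sup>2 + t\<^sup>2 * (cmod b)\<^sup>2 * Re (Bf F K \<psi> \<psi>) \<ge> 0"
  proof -
    fix t :: real
    define c where "c = - (of_real t * cnj b)"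
    have "Re (Bf F K (\<lambda>x. \<phi> x + c * \<psi> x) (\<lambda>x. \<phi> x + c * \<psi> x)) \<ge> 0"
      by (rule psdD(2)[OF assms])
    also have "Re (Bf F K (\<lambda>x. \<phi> x + c * \<psi> x) (\<lambda>x. \<phi> x + c * \<psi> x)) =
       Re (Bf F K \<phi> \<phi>) - 2 * t * (cmod b)\<^sup>2 + t\<^sup>2 * (cmod b)\<^sup>2 * Re (Bf F K \<psi> \<psi>)"
      unfolding Bf_expand h b_def[symmetric] c_def by (rule Re_expand_aux[OF a])
    finally show "Re (Bf F K \<phi> \<phi>) - 2 * t * (cmod b)\<^sup>2 + t\<^sup>2 * (cmod b)\<^sup>2 * Re (Bf F K \<psi> \<psi>) \<ge> 0" .
  qed
  from real_quad_aux[OF this _ psdD(2)[OF assms] psdD(2)[OF assms]] show ?thesis unfolding b_def by simp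
qed

lemma Bf_delta_left:
  assumes "x \<in> F" "finite F"
  shows "Bf F K (\<lambda>z. if z = x then 1 else 0) \<psi> = (\<Sum>y\<in>F. K x y * \<psi> y)"
proof -
  have "\<And>z. (\<Sum>y\<in>F. cnj (if z = x then 1 else 0) * K z y * \<psi> y) = (if z = x then (\<Sum>y\<in>F. K x y * \<psi> y) else 0)"
    by auto
  then have "Bf F K (\<lambda>z. if z = x then 1 else 0) \<psi> = (\<Sum>z\<in>F. if z = x then (\<Sum>y\<in>F. K x y * \<psi> y) else 0)"
    unfolding Bf_def by presburger
  also have "\<dots> = (\<Sum>y\<in>F. K x y * \<psi> y)" using assms by (simp only: sum.delta if_True)
  finally show ?thesis .
qed

lemma sum_delta_right:
  assumes "y \<in> F" "finite F"
  shows "(\<Sum>z\<in>F. f z * (if z = y then 1 else 0)) = (f y :: complex)"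
proof -
  have "(\<Sum>z\<in>F. f z * (if z = y then 1 else 0)) = (\<Sum>z\<in>F. if z = y then f z else 0)"
    by (rule sum.cong) auto
  also have "\<dots> = f y" using assms by (simp only: sum.delta if_True)
  finally show ?thesis .
qed

lemma Bf_delta_both:
  assumes "x \<in> F" "y \<in> F" "finite F"
  shows "Bf F K (\<lambda>z. if z = x then 1 else 0) (\<lambda>z. if z = y then 1 else 0) = K x y"
  using assms by (simp only: Bf_delta_left sum_delta_right)

lemma psd_diag:
  assumes "psd K" shows "Im (K x x) = 0" "Re (K x x) \<ge> 0"
proof -
  have e: "Bf {x} K (\<lambda>z. if z = x then 1 else 0) (\<lambda>z. if z = x then 1 else 0) = K x x"
    by (rule Bf_delta_both) auto
  show "Im (K x x) = 0" "Re (K x x) \<ge> 0" using psdD[OF assms, of "{x}" "\<lambda>z. if z = x then 1 else 0"]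
    unfolding e by auto
qed

lemma psd_herm:
  assumes "psd K" shows "K y x = cnj (K x y)"
proof -
  have e: "Bf {x,y} K (\<lambda>z. if z = a then 1 else 0) (\<lambda>z. if z = b then 1 else 0) = K a b"
    if "a \<in> {x,y}" "b \<in> {x,y}" for a b
    by (rule Bf_delta_both) (use that in auto)
  show ?thesis
    using psd_herm_form[OF assms, of "{x,y}" "\<lambda>z. if z = y then 1 else 0" "\<lambda>z. if z = x then 1 else 0"]
    by (simp only: e insertI1 insertI2 singletonI finite.emptyI finite.insertI)
qed

lemma psd_cs:
  assumes "psd K" shows "(cmod (K x y))\<^sup>2 \<le> Re (K x x) * Re (K y y)"
proof -
  have e: "Bf {x,y} K (\<lambda>z. if z = a then 1 else 0) (\<lambda>z. if z = b then 1 else 0) = K a b"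
    if "a \<in> {x,y}" "b \<in> {x,y}" for a b
    by (rule Bf_delta_both) (use that in auto)
  show ?thesis
    using psd_CS[OF assms, of "{x,y}" "\<lambda>z. if z = x then 1 else 0" "\<lambda>z. if z = y then 1 else 0"]
    by (simp only: e insertI1 insertI2 singletonI finite.emptyI finite.insertI)
qed

lemma psd_diag_zero:
  assumes "psd K" "Re (K x x) = 0" shows "K x y = 0" "K y x = 0"
proof -
  have "(cmod (K x y))\<^sup>2 \<le> 0" using psd_cs[OF assms(1), of x y] assms(2) by simp
  then show "K x y = 0" by simp
  then show "K y x = 0" using psd_herm[OF assms(1), of x y] by simp
qed



lemma sum_restrict_if:
  assumes "finite F" "G \<subseteq> F"
  shows "(\<Sum>x\<in>F. if x \<in> G then f x else 0) = (\<Sum>x\<in>G. f x)"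
proof -
  have "(\<Sum>x\<in>F. if x \<in> G then f x else 0) = sum f (F \<inter> G)"
    using sum.inter_restrict[OF assms(1), of f G] by simp
  also have "F \<inter> G = G" using assms(2) by blast
  finally show ?thesis by simp
qed

lemma Bf_restrict:
  assumes "finite F" "G \<subseteq> F"
  shows "Bf F K (\<lambda>x. if x\<in>G then \<phi> x else 0) (\<lambda>x. if x\<in>G then \<psi> x else 0) = Bf G K \<phi> \<psi>"
proof -
  have inner: "(\<Sum>y\<in>F. cnj (if x\<in>G then \<phi> x else 0) * K x y * (if y\<in>G then \<psi> y else 0))
     = (if x \<in> G then (\<Sum>y\<in>G. cnj (\<phi> x) * K x y * \<psi> y) else 0)" for x
  proof (cases "x \<in> G")
    case True
    have "(\<Sum>y\<in>F. cnj (if x\<in>G then \<phi> x else 0) * K x y * (if y\<in>G then \<psi> y else 0))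
       = (\<Sum>y\<in>F. if y\<in>G then cnj (\<phi> x) * K x y * \<psi> y else 0)"
      using True by (intro sum.cong) auto
    then show ?thesis using True sum_restrict_if[OF assms] by simp
  qed simp
  show ?thesis unfolding Bf_def inner by (rule sum_restrict_if[OF assms])
qed

definition schur_vec :: "('a\<Rightarrow>'a\<Rightarrow>complex) \<Rightarrow> 'a \<Rightarrow> 'a \<Rightarrow> complex" where
  "schur_vec K z = (\<lambda>x. K x z / of_real (sqrt (Re (K z z))))"

definition schur :: "('a\<Rightarrow>'a\<Rightarrow>complex) \<Rightarrow> 'a \<Rightarrow> ('a\<Rightarrow>'a\<Rightarrow>complex)" where
  "schur K z = (\<lambda>x y. K x y - schur_vec K z x * cnj (schur_vec K z y))"

lemma Bf_rank1:
  "Bf F (\<lambda>x y. v x * cnj (v y)) \<psi> \<psi> = (\<Sum>x\<in>F. cnj (\<psi> x) * v x) * cnj (\<Sum>x\<in>F. cnj (\<psi> x) * v x)"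
  unfolding Bf_def by (simp add: sum_distrib_left sum_distrib_right cnj_sum mult_ac)

lemma Bf_diff:
  "Bf F (\<lambda>x y. K x y - L x y) \<phi> \<psi> = Bf F K \<phi> \<psi> - Bf F L \<phi> \<psi>"
  unfolding Bf_def by (simp add: sum_subtractf algebra_simps)

lemma Bf_delta_right:
  assumes "z \<in> F" "finite F"
  shows "Bf F K \<phi> (\<lambda>y. if y = z then 1 else 0) = (\<Sum>x\<in>F. cnj (\<phi> x) * K x z)"
  unfolding Bf_def
  by (rule sum.cong[OF refl]) (use sum_delta_right[OF assms, of "\<lambda>y. cnj (\<phi> _) * K _ y"] in simp)

lemma psd_schur:
  assumes K: "psd K"
  shows "psd (schur K z)"
  unfolding psd_def
proof (intro allI impI)
  fix F :: "'a set" and \<psi> assume F: "finite F"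
  define v where "v = schur_vec K z"
  define s where "s = (\<Sum>x\<in>F. cnj (\<psi> x) * v x)"
  define r where "r = Re (K z z)"
  have r0: "r \<ge> 0" using psd_diag[OF K] r_def by simp
  have e1: "Bf F (schur K z) \<psi> \<psi> = Bf F K \<psi> \<psi> - s * cnj s"
    unfolding schur_def v_def[symmetric] Bf_diff Bf_rank1 s_def ..
  define G where "G = insert z F"
  have G: "finite G" "F \<subseteq> G" "z \<in> G" using F G_def by auto
  have "Bf G K (\<lambda>x. if x\<in>F then \<psi> x else 0) (\<lambda>y. if y = z then 1 else 0)
      = (\<Sum>x\<in>G. cnj (if x\<in>F then \<psi> x else 0) * K x z)"
    by (rule Bf_delta_right[OF G(3) G(1)])
  also have "\<dots> = (\<Sum>x\<in>G. if x\<in>F then cnj (\<psi> x) * K x z else 0)"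
    by (rule sum.cong) auto
  also have "\<dots> = (\<Sum>x\<in>F. cnj (\<psi> x) * K x z)" by (rule sum_restrict_if[OF G(1,2)])
  finally have e2: "Bf G K (\<lambda>x. if x\<in>F then \<psi> x else 0) (\<lambda>y. if y = z then 1 else 0) = (\<Sum>x\<in>F. cnj (\<psi> x) * K x z)" .
  have e3: "Bf G K (\<lambda>y. if y = z then 1 else 0) (\<lambda>y. if y = z then 1 else 0) = K z z"
    by (rule Bf_delta_both[OF G(3) G(3) G(1)])
  have e4: "Bf G K (\<lambda>x. if x\<in>F then \<psi> x else 0) (\<lambda>x. if x\<in>F then \<psi> x else 0) = Bf F K \<psi> \<psi>"
    by (rule Bf_restrict[OF G(1,2)])
  have cs: "(cmod (\<Sum>x\<in>F. cnj (\<psi> x) * K x z))\<^sup>2 \<le> Re (Bf F K \<psi> \<psi>) * r"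
    using psd_CS[OF K G(1), of "\<lambda>x. if x\<in>F then \<psi> x else 0" "\<lambda>y. if y = z then 1 else 0"]
    unfolding e2 e3 e4 r_def .
  have s_eq: "s = (\<Sum>x\<in>F. cnj (\<psi> x) * K x z) / of_real (sqrt r)"
    unfolding s_def v_def schur_vec_def r_def by (simp add: sum_divide_distrib)
  have sc: "s * cnj s = of_real ((cmod s)\<^sup>2)" by (metis complex_norm_square)
  have ss: "(cmod s)\<^sup>2 \<le> Re (Bf F K \<psi> \<psi>)"
  proof (cases "r = 0")
    case True then show ?thesis using s_eq psdD(2)[OF K F] by simp
  next
    case False
    then have rp: "r > 0" using r0 by simp
    have "(cmod s)\<^sup>2 = (cmod (\<Sum>x\<in>F. cnj (\<psi> x) * K x z))\<^sup>2 / r"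
      unfolding s_eq using rp by (simp add: norm_divide power_divide)
    also have "\<dots> \<le> Re (Bf F K \<psi> \<psi>)" using cs rp by (simp add: divide_le_eq)
    finally show ?thesis .
  qed
  show "Im (Bf F (schur K z) \<psi> \<psi>) = 0 \<and> 0 \<le> Re (Bf F (schur K z) \<psi> \<psi>)"
    unfolding e1 sc using psdD[OF K F, of \<psi>] ss by simp
qed

lemma schur_zero:
  assumes K: "psd K"
  shows "schur K z z y = 0" "schur K z y z = 0"
proof -
  define r where "r = Re (K z z)"
  have r0: "r \<ge> 0" using psd_diag[OF K] r_def by simp
  have kzz: "K z z = of_real r" using psd_diag[OF K, of z] r_def by (simp add: complex_eq_iff)
  have h: "K y z = cnj (K z y)" by (rule psd_herm[OF K])
  show "schur K z z y = 0"
  proof (cases "r = 0")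
    case True
    then have "K z y = 0" using psd_diag_zero(1)[OF K, of z y] r_def by simp
    moreover have "schur_vec K z z = 0" unfolding schur_vec_def r_def[symmetric] True by simp
    ultimately show ?thesis unfolding schur_def by simp
  next
    case False
    then have rp: "r > 0" using r0 by simp
    have "schur_vec K z z = of_real r / of_real (sqrt r)"
      unfolding schur_vec_def by (simp add: kzz)
    also have "\<dots> = of_real (r / sqrt r)" by simp
    also have "\<dots> = of_real (sqrt r)" using real_div_sqrt[OF r0] by simp
    finally have a: "schur_vec K z z = of_real (sqrt r)" .
    have b: "cnj (schur_vec K z y) = K z y / of_real (sqrt r)"
      unfolding schur_vec_def h r_def[symmetric] by simp
    have "sqrt r \<noteq> 0" using rp by simp
    then show ?thesis unfolding schur_def a b by simp
  qed
  have herm: "schur K z y z = cnj (schur K z z y)"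
    using psd_herm[OF psd_schur[OF K]] .
  then show "schur K z y z = 0" using \<open>schur K z z y = 0\<close> by simp
qed

lemma schur_decomp: "K x y = schur K z x y + schur_vec K z x * cnj (schur_vec K z y)"
  unfolding schur_def by simp

lemma fin_chol:
  assumes "finite F" "psd K"
  shows "\<exists>(c::nat \<Rightarrow> 'a \<Rightarrow> complex) n. \<forall>x\<in>F. \<forall>y\<in>F. K x y = (\<Sum>k<n. c k x * cnj (c k y))"
  using assms
proof (induction F arbitrary: K rule: finite_induct)
  case empty then show ?case by auto
next
  case (insert z F)
  from insert.IH[OF psd_schur[OF insert.prems, of z]] obtain c and n :: nat where
    c: "\<forall>x\<in>F. \<forall>y\<in>F. schur K z x y = (\<Sum>k<n. c k x * cnj (c k y))" by blast
  define c' where "c' = (\<lambda>k. if k < n then (\<lambda>x. if x \<in> F then c k x else 0) else schur_vec K z)"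
  have sumeq: "(\<Sum>k<Suc n. c' k x * cnj (c' k y)) =
      (if x \<in> F \<and> y \<in> F then (\<Sum>k<n. c k x * cnj (c k y)) else 0) + schur_vec K z x * cnj (schur_vec K z y)" for x y
    unfolding c'_def by (auto intro!: sum.cong)
  show ?case
  proof (intro exI[of _ c'] exI[of _ "Suc n"] ballI)
    fix x y assume xy: "x \<in> insert z F" "y \<in> insert z F"
    show "K x y = (\<Sum>k<Suc n. c' k x * cnj (c' k y))"
    proof (cases "x \<in> F \<and> y \<in> F")
      case True then show ?thesis unfolding sumeq using c schur_decomp[of K x y z] by simp
    next
      case False
      then have "x = z \<or> y = z" using xy by auto
      then have "schur K z x y = 0" using schur_zero[OF insert.prems] by auto
      then show ?thesis unfolding sumeq if_not_P[OF False] using schur_decomp[of K x y z] by simp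
    qed
  qed
qed



lemma sum_prod_split:
  "(\<Sum>a\<in>A\<times>B. f a) = (\<Sum>x\<in>A. \<Sum>y\<in>B. f (x,y))"
  by (simp add: sum.cartesian_product)

lemma Bf_tensor_aux:
  assumes F1: "finite F1" and F2: "finite F2"
    and B: "\<forall>u\<in>F2. \<forall>u'\<in>F2. B u u' = (\<Sum>k<n. b k u * cnj (b k u'))"
  shows "Bf (F1\<times>F2) (tensor_op A B) \<psi> \<psi> =
     (\<Sum>k<n. Bf F1 A (\<lambda>p. \<Sum>u\<in>F2. \<psi> (p,u) * cnj (b k u)) (\<lambda>p. \<Sum>u\<in>F2. \<psi> (p,u) * cnj (b k u)))"
proof -
  define h where "h = (\<lambda>k p u p' u'. cnj (\<psi> (p,u)) * b k u * A p p' * \<psi> (p',u') * cnj (b k u'))"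
  have "Bf (F1\<times>F2) (tensor_op A B) \<psi> \<psi> = (\<Sum>p\<in>F1. \<Sum>u\<in>F2. \<Sum>p'\<in>F1. \<Sum>u'\<in>F2. \<Sum>k<n. h k p u p' u')"
    unfolding Bf_def sum_prod_split
  proof (intro sum.cong refl)
    fix p u p' u' assume "p \<in> F1" "u \<in> F2" "p' \<in> F1" "u' \<in> F2"
    then have "B u u' = (\<Sum>k<n. b k u * cnj (b k u'))" using B by blast
    then show "cnj (\<psi> (p, u)) * tensor_op A B (p, u) (p', u') * \<psi> (p', u') = (\<Sum>k<n. h k p u p' u')"
      unfolding tensor_op_def h_def by (simp add: sum_distrib_left sum_distrib_right mult_ac)
  qed
  also have "\<dots> = (\<Sum>k<n. \<Sum>p\<in>F1. \<Sum>u\<in>F2. \<Sum>p'\<in>F1. \<Sum>u'\<in>F2. h k p u p' u')"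
    by (simp only: sum.swap[where B="{..<n}"])
  also have "\<dots> = (\<Sum>k<n. Bf F1 A (\<lambda>p. \<Sum>u\<in>F2. \<psi> (p,u) * cnj (b k u)) (\<lambda>p. \<Sum>u\<in>F2. \<psi> (p,u) * cnj (b k u)))"
  proof (rule sum.cong[OF refl])
    fix k
    have "Bf F1 A (\<lambda>p. \<Sum>u\<in>F2. \<psi> (p,u) * cnj (b k u)) (\<lambda>p. \<Sum>u\<in>F2. \<psi> (p,u) * cnj (b k u))
        = (\<Sum>p\<in>F1. \<Sum>p'\<in>F1. \<Sum>u\<in>F2. \<Sum>u'\<in>F2. h k p u p' u')"
      unfolding Bf_def h_def
      by (simp add: cnj_sum sum_distrib_left sum_distrib_right mult_ac)
    also have "\<dots> = (\<Sum>p\<in>F1. \<Sum>u\<in>F2. \<Sum>p'\<in>F1. \<Sum>u'\<in>F2. h k p u p' u')"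
      by (rule sum.cong[OF refl], rule sum.swap)
    finally show "(\<Sum>p\<in>F1. \<Sum>u\<in>F2. \<Sum>p'\<in>F1. \<Sum>u'\<in>F2. h k p u p' u') =
        Bf F1 A (\<lambda>p. \<Sum>u\<in>F2. \<psi> (p,u) * cnj (b k u)) (\<lambda>p. \<Sum>u\<in>F2. \<psi> (p,u) * cnj (b k u))" by simp
  qed
  finally show ?thesis .
qed

lemma psd_tensor:
  assumes A: "psd A" and B: "psd B"
  shows "psd (tensor_op A B)"
  unfolding psd_def
proof (intro allI impI)
  fix F :: "('a \<times> 'b) set" and \<psi> :: "'a \<times> 'b \<Rightarrow> complex" assume F: "finite F"
  define F1 where "F1 = fst ` F"
  define F2 where "F2 = snd ` F"
  have fin: "finite F1" "finite F2" using F F1_def F2_def by auto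
  have sub: "F \<subseteq> F1 \<times> F2" unfolding F1_def F2_def by force
  obtain b and n :: nat where bn: "\<forall>u\<in>F2. \<forall>u'\<in>F2. B u u' = (\<Sum>k<n. b k u * cnj (b k u'))"
    using fin_chol[OF fin(2) B] by blast
  define \<psi>0 where "\<psi>0 = (\<lambda>x. if x \<in> F then \<psi> x else 0)"
  have "Bf F (tensor_op A B) \<psi> \<psi> = Bf (F1\<times>F2) (tensor_op A B) \<psi>0 \<psi>0"
    unfolding \<psi>0_def by (rule Bf_restrict[symmetric]) (use fin sub in auto)
  also have "\<dots> = (\<Sum>k<n. Bf F1 A (\<lambda>p. \<Sum>u\<in>F2. \<psi>0 (p,u) * cnj (b k u)) (\<lambda>p. \<Sum>u\<in>F2. \<psi>0 (p,u) * cnj (b k u)))"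
    by (rule Bf_tensor_aux[OF fin bn])
  finally have e: "Bf F (tensor_op A B) \<psi> \<psi> = \<dots>" .
  show "Im (Bf F (tensor_op A B) \<psi> \<psi>) = 0 \<and> 0 \<le> Re (Bf F (tensor_op A B) \<psi> \<psi>)"
    unfolding e Im_sum Re_sum using psdD[OF A fin(1)] by (auto intro: sum_nonneg)
qed

lemma psd_rank1: "psd (\<lambda>x y. v x * cnj (v y))"
  unfolding psd_def
proof (intro allI impI)
  fix F :: "'a set" and \<psi> :: "'a \<Rightarrow> complex"
  define s where "s = (\<Sum>x\<in>F. cnj (\<psi> x) * v x)"
  have "Bf F (\<lambda>x y. v x * cnj (v y)) \<psi> \<psi> = of_real ((cmod s)\<^sup>2)"
    unfolding Bf_rank1 s_def[symmetric] by (metis complex_norm_square)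
  then show "Im (Bf F (\<lambda>x y. v x * cnj (v y)) \<psi> \<psi>) = 0 \<and> 0 \<le> Re (Bf F (\<lambda>x y. v x * cnj (v y)) \<psi> \<psi>)"
    by simp
qed

lemma Bf_scale: "Bf F (\<lambda>x y. c * K x y) \<phi> \<psi> = c * Bf F K \<phi> \<psi>"
  unfolding Bf_def by (simp add: sum_distrib_left mult_ac)

lemma psd_scale:
  assumes "psd K" "c \<ge> 0"
  shows "psd (\<lambda>x y. of_real c * K x y)"
  unfolding psd_def Bf_scale using psdD[OF assms(1)] assms(2) by simp

lemma psd_zero: "psd (\<lambda>x y. 0)"
  unfolding psd_def Bf_def by simp

lemma psd_inj:
  assumes K: "psd K" and f: "inj f"
  shows "psd (\<lambda>x y. K (f x) (f y))"
  unfolding psd_def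
proof (intro allI impI)
  fix F :: "'b set" and \<psi> :: "'b \<Rightarrow> complex" assume F: "finite F"
  define \<psi>' where "\<psi>' = (\<lambda>a. \<psi> (inv f a))"
  have fin: "finite (f ` F)" using F by simp
  have inj: "inj_on f F" using f by (meson inj_on_subset subset_UNIV)
  have iv: "\<And>x. inv f (f x) = x" using f by simp
  have "Bf (f ` F) K \<psi>' \<psi>' = Bf F (\<lambda>x y. K (f x) (f y)) \<psi> \<psi>"
    unfolding Bf_def sum.reindex[OF inj] \<psi>'_def by (simp add: iv)
  then show "Im (Bf F (\<lambda>x y. K (f x) (f y)) \<psi> \<psi>) = 0 \<and> 0 \<le> Re (Bf F (\<lambda>x y. K (f x) (f y)) \<psi> \<psi>)"
    using psdD[OF K fin, of \<psi>'] by simp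
qed

lemma has_sum_finite_sum:
  fixes f :: "'j \<Rightarrow> 'i \<Rightarrow> 'c::{topological_comm_monoid_add}"
  assumes "finite J" "\<And>j. j \<in> J \<Longrightarrow> ((\<lambda>i. f j i) has_sum s j) A"
  shows "((\<lambda>i. \<Sum>j\<in>J. f j i) has_sum (\<Sum>j\<in>J. s j)) A"
  using assms
proof (induction J rule: finite_induct)
  case empty then show ?case by simp
next
  case (insert x F)
  have "((\<lambda>i. f x i + (\<Sum>j\<in>F. f j i)) has_sum (s x + (\<Sum>j\<in>F. s j))) A"
    by (rule has_sum_add) (use insert in auto)
  then show ?case using insert by simp
qed

lemma psd_limit:
  fixes T :: "'i \<Rightarrow> 'a \<Rightarrow> 'a \<Rightarrow> complex"
  assumes T: "\<And>i. psd (T i)" and S: "\<And>p q. ((\<lambda>i. T i p q) has_sum S p q) UNIV"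
  shows "psd S"
  unfolding psd_def
proof (intro allI impI)
  fix F :: "'a set" and \<psi> :: "'a \<Rightarrow> complex" assume F: "finite F"
  have "((\<lambda>i. Bf F (T i) \<psi> \<psi>) has_sum Bf F S \<psi> \<psi>) UNIV"
    unfolding Bf_def
    apply (rule has_sum_finite_sum[OF F])
    apply (rule has_sum_finite_sum[OF F])
    apply (rule has_sum_cmult_left)
    apply (rule has_sum_cmult_right)
    by (rule S)
  then have h1: "((\<lambda>i. Im (Bf F (T i) \<psi> \<psi>)) has_sum Im (Bf F S \<psi> \<psi>)) UNIV"
    and h2: "((\<lambda>i. Re (Bf F (T i) \<psi> \<psi>)) has_sum Re (Bf F S \<psi> \<psi>)) UNIV"
    by (rule has_sum_Im, rule has_sum_Re)
  have "((\<lambda>i. Im (Bf F (T i) \<psi> \<psi>)) has_sum 0) UNIV"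
    using psdD(1)[OF T F] by simp
  then have "Im (Bf F S \<psi> \<psi>) = 0" using h1 has_sum_unique by blast
  moreover have "Re (Bf F S \<psi> \<psi>) \<ge> 0"
    by (rule has_sum_nonneg[OF h2]) (use psdD(2)[OF T F] in auto)
  ultimately show "Im (Bf F S \<psi> \<psi>) = 0 \<and> 0 \<le> Re (Bf F S \<psi> \<psi>)" by simp
qed



lemma has_sum_single_pt:
  assumes "\<And>y. y \<noteq> b \<Longrightarrow> f y = 0"
  shows "(f has_sum f b) UNIV"
proof -
  have "(f has_sum f b) {b}" using has_sum_finite[of "{b}" f] by simp
  moreover have "(f has_sum f b) UNIV \<longleftrightarrow> (f has_sum f b) {b}"
    by (rule has_sum_cong_neutral) (use assms in auto)
  ultimately show ?thesis by simp
qed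

lemma nonneg_summable_prod:
  fixes g :: "'a \<times> 'b \<Rightarrow> real"
  assumes "\<And>z. g z \<ge> 0" "\<And>a. ((\<lambda>b. g (a,b)) has_sum G a) UNIV" "G summable_on UNIV"
  shows "g summable_on UNIV"
proof -
  have "g summable_on Sigma UNIV (\<lambda>_. UNIV)"
    by (rule summable_on_SigmaI[where g=G]) (use assms in auto)
  then show ?thesis by simp
qed

lemma nonneg_summable_prod':
  fixes g :: "'a \<times> 'b \<Rightarrow> real"
  assumes "\<And>z. g z \<ge> 0" "\<And>b. ((\<lambda>a. g (a,b)) has_sum G b) UNIV" "G summable_on UNIV"
  shows "g summable_on UNIV"
proof -
  have "(\<lambda>(x,y). g (y,x)) summable_on UNIV"
    by (rule nonneg_summable_prod[where G=G]) (use assms in auto)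
  then have "(\<lambda>(x,y). g (y,x)) summable_on (UNIV \<times> UNIV)" by simp
  then have "g summable_on (UNIV \<times> UNIV)" using summable_on_swap by blast
  then show ?thesis by simp
qed

lemma dom_summable:
  fixes f :: "'a \<Rightarrow> complex"
  assumes "g summable_on A" "\<And>z. z \<in> A \<Longrightarrow> cmod (f z) \<le> g z"
  shows "f summable_on A"
proof -
  have "(\<lambda>z. norm (f z)) summable_on A" by (rule summable_on_comparison_test[OF assms(1)]) (use assms(2) in auto)
  then show ?thesis by (rule abs_summable_summable)
qed

lemma fubini_has_sum:
  fixes f :: "'a \<times> 'b \<Rightarrow> complex"
  assumes f: "f summable_on UNIV"
    and h: "\<And>a. ((\<lambda>b. f (a,b)) has_sum h a) UNIV"
    and k: "\<And>b. ((\<lambda>a. f (a,b)) has_sum k b) UNIV"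
    and X: "(k has_sum X) UNIV"
  shows "(h has_sum X) UNIV"
proof -
  have f1: "(f has_sum infsum f UNIV) (Sigma UNIV (\<lambda>_. UNIV))" using f by simp
  have 1: "(h has_sum infsum f UNIV) UNIV"
    by (rule has_sum_SigmaD[OF f1]) (use h in auto)
  have "(f has_sum infsum f UNIV) (UNIV \<times> UNIV)" using f1 by simp
  then have "((\<lambda>(x,y). f (y,x)) has_sum infsum f UNIV) (UNIV \<times> UNIV)" using has_sum_swap by blast
  then have f2: "((\<lambda>(x,y). f (y,x)) has_sum infsum f UNIV) (Sigma UNIV (\<lambda>_. UNIV))" by simp
  have 2: "(k has_sum infsum f UNIV) UNIV"
    by (rule has_sum_SigmaD[OF f2]) (use k in auto)
  have "X = infsum f UNIV" using X 2 has_sum_unique by blast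
  then show ?thesis using 1 by simp
qed

lemma psd_diag_real: "psd K \<Longrightarrow> K x x = of_real (Re (K x x))"
  using psd_diag[of K x] by (simp add: complex_eq_iff)

lemma psd_entry_bound:
  assumes "psd K" shows "cmod (K x y) \<le> (Re (K x x) + Re (K y y)) / 2"
proof -
  define a where "a = Re (K x x)"
  define b where "b = Re (K y y)"
  have ab: "a \<ge> 0" "b \<ge> 0" using psd_diag[OF assms] a_def b_def by auto
  have "(cmod (K x y))\<^sup>2 \<le> a * b" using psd_cs[OF assms] a_def b_def by simp
  also have "a * b \<le> ((a + b)/2)\<^sup>2"
  proof -
    have e: "(a+b)\<^sup>2 - 4*(a*b) = (a-b)\<^sup>2" by (simp add: power2_eq_square algebra_simps)
    have "0 \<le> (a-b)\<^sup>2" by simp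
    then have "4*(a*b) \<le> (a+b)\<^sup>2" using e by linarith
    moreover have "((a + b)/2)\<^sup>2 = (a+b)\<^sup>2 / 4" by (simp add: power_divide)
    ultimately show ?thesis by simp
  qed
  finally have "(cmod (K x y))\<^sup>2 \<le> ((a + b)/2)\<^sup>2" .
  moreover have "0 \<le> (a + b)/2" using ab by simp
  ultimately have "cmod (K x y) \<le> (a + b)/2" by (rule power2_le_imp_le)
  then show ?thesis unfolding a_def b_def .
qed

lemma mm_diag_Re_has_sum:
  assumes "mixed_memory K"
  shows "((\<lambda>x. Re (K x x)) has_sum Re (infsum (\<lambda>x. K x x) UNIV)) UNIV"
  using assms unfolding mixed_memory_psd by (intro has_sum_Re) simp

lemma mm_diag_Re_summable:
  assumes "mixed_memory K"
  shows "(\<lambda>x. Re (K x x)) summable_on UNIV"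
  using mm_diag_Re_has_sum[OF assms] has_sum_imp_summable by blast

lemma mm_trace_real:
  assumes "mixed_memory K"
  shows "infsum (\<lambda>x. K x x) UNIV = of_real (Re (infsum (\<lambda>x. K x x) UNIV))"
        "Re (infsum (\<lambda>x. K x x) UNIV) \<ge> 0"
proof -
  have p: "psd K" using assms mixed_memory_psd by blast
  have h: "((\<lambda>x. K x x) has_sum infsum (\<lambda>x. K x x) UNIV) UNIV" using assms unfolding mixed_memory_psd by (intro has_sum_infsum) blast
  have "((\<lambda>x. Im (K x x)) has_sum Im (infsum (\<lambda>x. K x x) UNIV)) UNIV" by (rule has_sum_Im[OF h])
  moreover have "((\<lambda>x. Im (K x x)) has_sum 0) UNIV" using psd_diag(1)[OF p] by simp
  ultimately have "Im (infsum (\<lambda>x. K x x) UNIV) = 0" using has_sum_unique by blast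
  then show "infsum (\<lambda>x. K x x) UNIV = of_real (Re (infsum (\<lambda>x. K x x) UNIV))" by (simp add: complex_eq_iff)
  show "Re (infsum (\<lambda>x. K x x) UNIV) \<ge> 0"
    using has_sum_nonneg[OF mm_diag_Re_has_sum[OF assms]] psd_diag(2)[OF p] by blast
qed

lemma Bf_lin2:
  "Bf F K \<phi> (\<lambda>x. \<psi>1 x + c * \<psi>2 x) = Bf F K \<phi> \<psi>1 + c * Bf F K \<phi> \<psi>2"
  unfolding Bf_def by (simp add: sum_distrib_left sum.distrib algebra_simps)

lemma has_sum_Bf:
  fixes T :: "'i \<Rightarrow> 'a \<Rightarrow> 'a \<Rightarrow> complex"
  assumes S: "\<And>p q. ((\<lambda>i. T i p q) has_sum S p q) UNIV" and F: "finite F"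
  shows "((\<lambda>i. Bf F (T i) \<phi> \<psi>) has_sum Bf F S \<phi> \<psi>) UNIV"
  unfolding Bf_def
  apply (rule has_sum_finite_sum[OF F])
  apply (rule has_sum_finite_sum[OF F])
  apply (rule has_sum_cmult_left)
  apply (rule has_sum_cmult_right)
  by (rule S)



lemma Bf_v:
  assumes "a \<in> F" "b \<in> F" "finite F"
  shows "Bf F K (\<lambda>z. (if z = a then 1 else 0) + (-1) * (if z = b then 1 else 0))
                (\<lambda>z. (if z = a then 1 else 0) + (-1) * (if z = b then 1 else 0))
       = K a a - K a b - K b a + K b b"
  by (simp only: Bf_expand Bf_delta_both[OF assms(1,1,3)] Bf_delta_both[OF assms(1,2,3)]
         Bf_delta_both[OF assms(2,1,3)] Bf_delta_both[OF assms(2,2,3)]) simp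

lemma Bf_cv:
  assumes "c \<in> F" "a \<in> F" "b \<in> F" "finite F"
  shows "Bf F K (\<lambda>z. if z = c then 1 else 0) (\<lambda>z. (if z = a then 1 else 0) + (-1) * (if z = b then 1 else 0))
       = K c a - K c b"
  by (simp only: Bf_lin2 Bf_delta_both[OF assms(1,2,4)] Bf_delta_both[OF assms(1,3,4)]) simp

lemma col_inv:
  fixes \<sigma> :: "((('x \<times> 'r) \<times> 'e) \<times> 'x) \<Rightarrow> ((('x \<times> 'r) \<times> 'e) \<times> 'x) \<Rightarrow> complex"
  assumes mm: "mixed_memory \<sigma>" and sup: "supp \<sigma> \<subseteq> separable_pred"
  shows "\<sigma> (((u,r),e),x) b = \<sigma> (((x,r),e),u) b"
proof -
  have p: "psd \<sigma>" using mm mixed_memory_psd by blast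
  define \<phi> where "\<phi> = (\<lambda>a. \<sigma> a b)"
  have ell: "is_ell2 \<phi>"
    unfolding is_ell2_def \<phi>_def
    by (rule summable_on_comparison_test[where f = "\<lambda>a. Re (\<sigma> a a) * Re (\<sigma> b b)"])
       (use summable_on_cmult_left[OF mm_diag_Re_summable[OF mm]] psd_cs[OF p] in auto)
  have "((\<lambda>x. (cmod (if x = b then (1::complex) else 0))\<^sup>2) has_sum (cmod (if b = b then (1::complex) else 0))\<^sup>2) UNIV"
    by (rule has_sum_single_pt) simp
  then have dl: "is_ell2 (\<lambda>y. if y = b then (1::complex) else 0)"
    unfolding is_ell2_def by (rule has_sum_imp_summable)
  have op: "op_apply \<sigma> (\<lambda>y. if y = b then 1 else 0) = \<phi>"
    unfolding op_apply_def \<phi>_def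
  proof (rule ext)
    fix a
    have "((\<lambda>y. \<sigma> a y * (if y = b then 1 else 0)) has_sum (\<sigma> a b * (if b = b then 1 else 0))) UNIV"
      by (rule has_sum_single_pt) simp
    then show "infsum (\<lambda>y. \<sigma> a y * (if y = b then 1 else 0)) UNIV = \<sigma> a b"
      by (simp add: infsumI)
  qed
  have "\<phi> \<in> supp \<sigma>"
    unfolding supp_def ell2_closure_def
  proof (intro CollectI conjI allI impI ell)
    fix \<epsilon> :: real assume "\<epsilon> > 0"
    moreover have "\<phi> \<in> {op_apply \<sigma> \<psi> |\<psi>. is_ell2 \<psi>}" using op dl by blast
    moreover have "ell2_norm (\<lambda>x. \<phi> x - \<phi> x) = 0" by (simp add: ell2_norm_def)
    ultimately show "\<exists>\<psi>\<in>{op_apply \<sigma> \<psi> |\<psi>. is_ell2 \<psi>}. ell2_norm (\<lambda>x. \<phi> x - \<psi> x) < \<epsilon>" by force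
  qed
  then have "\<phi> \<in> separable_pred" using sup by blast
  then have "swap_Xu \<phi> = \<phi>" unfolding separable_pred_def by blast
  then have "swap_Xu \<phi> (((x,r),e),u) = \<phi> (((x,r),e),u)" by simp
  then show ?thesis unfolding swap_Xu_def \<phi>_def by simp
qed

lemma term_inv:
  fixes \<sigma> :: "((('x \<times> 'r) \<times> 'e) \<times> 'x) \<Rightarrow> ((('x \<times> 'r) \<times> 'e) \<times> 'x) \<Rightarrow> complex"
    and T :: "nat \<Rightarrow> ((('x \<times> 'r) \<times> 'e) \<times> 'x) \<Rightarrow> ((('x \<times> 'r) \<times> 'e) \<times> 'x) \<Rightarrow> complex"
  assumes psdT: "\<And>i. psd (T i)" and hs: "\<And>p q. ((\<lambda>i. T i p q) has_sum \<sigma> p q) UNIV"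
    and col: "\<And>x r e u b. \<sigma> (((u,r),e),x) b = \<sigma> (((x,r),e),u) b"
    and ps: "psd \<sigma>"
  shows "T i c (((u,r),e),x) = T i c (((x,r),e),u)"
proof -
  define a where "a = (((x,r),e),u)"
  define sa where "sa = (((u,r),e),x)"
  define F where "F = {a, sa, c}"
  have F: "finite F" "a \<in> F" "sa \<in> F" "c \<in> F" unfolding F_def by auto
  define v where "v = (\<lambda>z. (if z = a then 1 else 0) + (-1) * (if z = sa then (1::complex) else 0))"
  have row: "\<sigma> b (((u',r'),e'),x') = \<sigma> b (((x',r'),e'),u')" for b u' r' e' x'
    using psd_herm[OF ps, of "(((u',r'),e'),x')" b] psd_herm[OF ps, of "(((x',r'),e'),u')" b] col[of u' r' e' x' b]
    by simp
  have s1: "\<sigma> a sa = \<sigma> a a" unfolding a_def sa_def by (rule row)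
  have s2: "\<sigma> sa a = \<sigma> a a" unfolding a_def sa_def by (rule col)
  have s3: "\<sigma> sa sa = \<sigma> a sa" unfolding a_def sa_def by (rule col)
  have "Bf F \<sigma> v v = 0" unfolding v_def Bf_v[OF F(2,3,1)] s1 s2 s3 by simp
  moreover have "((\<lambda>j. Bf F (T j) v v) has_sum Bf F \<sigma> v v) UNIV"
    by (rule has_sum_Bf) (rule hs, rule F(1))
  ultimately have "((\<lambda>j. Bf F (T j) v v) has_sum 0) UNIV" by simp
  then have "((\<lambda>j. Re (Bf F (T j) v v)) has_sum 0) UNIV" using has_sum_Re by fastforce
  then have z: "Re (Bf F (T i) v v) = 0"
    by (rule nonneg_has_sum_le_0D) (use psdD(2)[OF psdT F(1)] in auto)
  have "(cmod (Bf F (T i) (\<lambda>z. if z = c then 1 else 0) v))\<^sup>2 \<le>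
      Re (Bf F (T i) (\<lambda>z. if z = c then 1 else 0) (\<lambda>z. if z = c then 1 else 0)) * Re (Bf F (T i) v v)"
    by (rule psd_CS[OF psdT F(1)])
  then have "Bf F (T i) (\<lambda>z. if z = c then 1 else 0) v = 0" unfolding z by simp
  then have "T i c a - T i c sa = 0" unfolding v_def Bf_cv[OF F(4,2,3,1)] .
  then show ?thesis unfolding a_def sa_def by simp
qed



lemma dir2:
  fixes \<rho> :: "'x \<times> 'r \<Rightarrow> 'x \<times> 'r \<Rightarrow> complex"
  assumes qs: "qsat \<rho> (separable_pred :: ((('x \<times> 'r) \<times> unit) \<times> 'x \<Rightarrow> complex) set)"
  shows "separable \<rho>"
proof -
  from qs obtain \<sigma> :: "((('x \<times> 'r) \<times> unit) \<times> 'x) \<Rightarrow> ((('x \<times> 'r) \<times> unit) \<times> 'x) \<Rightarrow> complex" where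
    mm: "mixed_memory \<sigma>" and sep: "separable \<sigma>" and sup: "supp \<sigma> \<subseteq> separable_pred"
    and tr: "\<And>p p'. ((\<lambda>(e, u). \<sigma> ((p, e), u) ((p', e), u)) has_sum \<rho> p p') UNIV"
    unfolding qsat_def by blast
  from sep obtain A :: "nat \<Rightarrow> ('x \<times> 'r) \<times> unit \<Rightarrow> ('x \<times> 'r) \<times> unit \<Rightarrow> complex"
    and B :: "nat \<Rightarrow> 'x \<Rightarrow> 'x \<Rightarrow> complex" where
    AB: "\<And>i. mixed_memory (A i)" "\<And>i. mixed_memory (B i)"
    and hs: "\<And>p q. ((\<lambda>i. tensor_op (A i) (B i) p q) has_sum \<sigma> p q) UNIV"
    unfolding separable_def by blast
  have psA: "psd (A i)" for i using AB(1) mixed_memory_psd by blast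
  have psB: "psd (B i)" for i using AB(2) mixed_memory_psd by blast
  have psT: "psd (tensor_op (A i) (B i))" for i by (rule psd_tensor[OF psA psB])
  have ps: "psd \<sigma>" using mm mixed_memory_psd by blast
  have col: "\<sigma> (((u,r),e),x) b = \<sigma> (((x,r),e),u) b" for u r e x b
    by (rule col_inv[OF mm sup])
  have Tc: "tensor_op (A i) (B i) c (((u,r),e),x) = tensor_op (A i) (B i) c (((x,r),e),u)" for i c u r e x
    by (rule term_inv[where T="\<lambda>i. tensor_op (A i) (B i)", OF psT hs col ps])
  have Tr: "tensor_op (A i) (B i) (((u,r),e),x) d = tensor_op (A i) (B i) (((x,r),e),u) d" for i d u r e x
    using psd_herm[OF psT[of i], where x=d and y="(((u,r),e),x)"] psd_herm[OF psT[of i], where x=d and y="(((x,r),e),u)"]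
      Tc[where i=i and c=d and u=u and r=r and e=e and x=x]
    by simp
  have R1: "A i p ((x',r'),e') * B i u0 u0 = A i p ((u0,r'),e') * B i u0 x'" for i p x' r' e' u0
    using Tc[where i=i and c="(p,u0)" and u=u0 and r=r' and e=e' and x=x'] unfolding tensor_op_def by simp
  have R2: "A i ((x,r),e) p' * B i u0 u0 = A i ((u0,r),e) p' * B i x u0" for i p' x r e u0
    using Tr[where i=i and d="(p',u0)" and u=u0 and r=r and e=e and x=x] unfolding tensor_op_def by simp
  define u0 where "u0 = (\<lambda>i. SOME u. Re (B i u u) \<noteq> 0)"
  define w where "w = (\<lambda>i x. B i x (u0 i) / B i (u0 i) (u0 i))"
  define W where "W = (\<lambda>i x y. w i x * cnj (w i y))"
  define tB where "tB = (\<lambda>i. infsum (\<lambda>u. B i u u) UNIV)"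
  define V where "V = (\<lambda>i r r'. tB i * A i ((u0 i, r), ()) ((u0 i, r'), ()))"
  have K1: "tB i * A i ((x,r),()) ((x',r'),()) = W i x x' * V i r r'" for i x r x' r'
  proof (cases "\<exists>u. Re (B i u u) \<noteq> 0")
    case True
    then have "Re (B i (u0 i) (u0 i)) \<noteq> 0" unfolding u0_def by (rule someI_ex)
    define \<beta> where "\<beta> = B i (u0 i) (u0 i)"
    have b0: "\<beta> \<noteq> 0" using \<open>Re (B i (u0 i) (u0 i)) \<noteq> 0\<close> \<beta>_def by auto
    have bc: "cnj \<beta> = \<beta>" using psd_diag(1)[OF psB, of i "u0 i"] \<beta>_def by (simp add: complex_eq_iff)
    have hB: "cnj (B i x' (u0 i)) = B i (u0 i) x'" using psd_herm[OF psB, of i x' "u0 i"] by simp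
    have r1: "A i ((x,r),()) ((x',r'),()) * \<beta> = A i ((x,r),()) ((u0 i,r'),()) * B i (u0 i) x'"
      unfolding \<beta>_def by (rule R1)
    have r2: "A i ((x,r),()) ((u0 i,r'),()) * \<beta> = A i ((u0 i,r),()) ((u0 i,r'),()) * B i x (u0 i)"
      unfolding \<beta>_def by (rule R2)
    have "A i ((x,r),()) ((x',r'),()) * \<beta> * \<beta> = A i ((u0 i,r),()) ((u0 i,r'),()) * B i x (u0 i) * B i (u0 i) x'"
      using r1 r2 by (metis mult.assoc mult.commute)
    then have "A i ((x,r),()) ((x',r'),()) = A i ((u0 i,r),()) ((u0 i,r'),()) * B i x (u0 i) * B i (u0 i) x' / (\<beta> * \<beta>)"
      using b0 by (simp add: field_simps)
    then show ?thesis unfolding W_def V_def w_def \<beta>_def[symmetric] using bc hB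
      by (simp add: field_simps)
  next
    case False
    then have z: "B i u v = 0" for u v using psd_diag_zero(1)[OF psB] by blast
    then have "tB i = 0" unfolding tB_def by simp
    moreover have "W i x x' = 0" unfolding W_def w_def z by simp
    ultimately show ?thesis by simp
  qed
  have mmW: "mixed_memory (W i)" for i
  proof -
    have p: "psd (W i)" unfolding W_def by (rule psd_rank1)
    define c where "c = Re (B i (u0 i) (u0 i)) / (cmod (B i (u0 i) (u0 i)))\<^sup>2"
    have c0: "c \<ge> 0" unfolding c_def using psd_diag(2)[OF psB] by simp
    have "(\<lambda>x. W i x x) summable_on UNIV"
    proof (rule dom_summable)
      show "(\<lambda>x. Re (B i x x) * c) summable_on UNIV"
        by (rule summable_on_cmult_left[OF mm_diag_Re_summable[OF AB(2)]])
      fix x :: 'x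
      have "cmod (W i x x) = (cmod (B i x (u0 i)))\<^sup>2 / (cmod (B i (u0 i) (u0 i)))\<^sup>2"
        unfolding W_def w_def by (simp add: norm_mult norm_divide power2_eq_square)
      also have "\<dots> \<le> (Re (B i x x) * Re (B i (u0 i) (u0 i))) / (cmod (B i (u0 i) (u0 i)))\<^sup>2"
        by (rule divide_right_mono[OF psd_cs[OF psB]]) simp
      also have "\<dots> = Re (B i x x) * c" unfolding c_def by simp
      finally show "cmod (W i x x) \<le> Re (B i x x) * c" .
    qed
    then show ?thesis using p mixed_memory_psd by blast
  qed
  have mmV: "mixed_memory (V i)" for i
  proof -
    define f where "f = (\<lambda>r::'r. ((u0 i, r), ()))"
    have inj: "inj f" unfolding f_def inj_def by simp
    have tr: "tB i = of_real (Re (tB i))" "Re (tB i) \<ge> 0"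
      unfolding tB_def by (rule mm_trace_real[OF AB(2)])+
    have V: "V i = (\<lambda>r r'. of_real (Re (tB i)) * A i (f r) (f r'))"
      unfolding V_def f_def using tr(1) by metis
    have p: "psd (V i)" unfolding V by (rule psd_scale[OF psd_inj[OF psA inj] tr(2)])
    have "(\<lambda>a. A i a a) summable_on (range f)"
      by (rule summable_on_subset_banach[of _ UNIV]) (use AB(1) mixed_memory_psd in auto)
    then have "((\<lambda>a. A i a a) \<circ> f) summable_on UNIV"
      using summable_on_reindex[of f UNIV "\<lambda>a. A i a a"] inj by (simp add: inj_on_def inj_def)
    then have "(\<lambda>r. of_real (Re (tB i)) * A i (f r) (f r)) summable_on UNIV"
      by (intro summable_on_cmult_right) (simp add: o_def)
    then show ?thesis using p mixed_memory_psd unfolding V by blast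
  qed
  have K4: "((\<lambda>i. tB i * A i (P,()) (Q,())) has_sum \<rho> P Q) UNIV" for P Q
  proof -
    define f where "f = (\<lambda>(i::nat, (e::unit, u::'x)). A i (P,e) (Q,e) * B i u u)"
    define gP where "gP = (\<lambda>(i::nat, (e::unit, u::'x)). Re (A i (P,e) (P,e)) * Re (B i u u))"
    define gQ where "gQ = (\<lambda>(i::nat, (e::unit, u::'x)). Re (A i (Q,e) (Q,e)) * Re (B i u u))"
    have gsum: "(\<lambda>z. gR z) summable_on UNIV"
      if gR: "gR = (\<lambda>(i::nat, (e::unit, u::'x)). Re (A i (R,e) (R,e)) * Re (B i u u))" for R gR
    proof (rule nonneg_summable_prod'[where G = "\<lambda>(e,u). Re (\<sigma> ((R,e),u) ((R,e),u))"])
      fix z show "gR z \<ge> 0" unfolding gR using psd_diag(2)[OF psA] psd_diag(2)[OF psB]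
        by (auto split: prod.splits)
    next
      fix eu :: "unit \<times> 'x"
      obtain e u where eu: "eu = (e,u)" by (metis prod.exhaust)
      have "((\<lambda>i. Re (tensor_op (A i) (B i) ((R,e),u) ((R,e),u))) has_sum Re (\<sigma> ((R,e),u) ((R,e),u))) UNIV"
        by (rule has_sum_Re[OF hs])
      moreover have "Re (tensor_op (A i) (B i) ((R,e),u) ((R,e),u)) = gR (i, eu)" for i
        unfolding gR eu tensor_op_def
        using psd_diag_real[OF psA, of i "(R,e)"] psd_diag_real[OF psB, of i u]
        by (metis (no_types, lifting) Re_complex_of_real case_prod_conv of_real_mult)
      ultimately show "((\<lambda>i. gR (i, eu)) has_sum (\<lambda>(e,u). Re (\<sigma> ((R,e),u) ((R,e),u))) eu) UNIV"
        unfolding eu by simp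
    next
      have "((\<lambda>eu. Re ((\<lambda>(e, u). \<sigma> ((R, e), u) ((R, e), u)) eu)) has_sum Re (\<rho> R R)) UNIV"
        by (rule has_sum_Re[OF tr])
      then have "(\<lambda>eu. Re ((\<lambda>(e, u). \<sigma> ((R, e), u) ((R, e), u)) eu)) summable_on UNIV"
        by (rule has_sum_imp_summable)
      moreover have "(\<lambda>eu. Re ((\<lambda>(e, u). \<sigma> ((R, e), u) ((R, e), u)) eu)) = (\<lambda>(e,u). Re (\<sigma> ((R,e),u) ((R,e),u)))"
        by (simp add: fun_eq_iff split: prod.splits)
      ultimately show "(\<lambda>(e,u). Re (\<sigma> ((R,e),u) ((R,e),u))) summable_on UNIV" by simp
    qed
    have fs: "f summable_on UNIV"
    proof (rule dom_summable[where g = "\<lambda>z. (gP z + gQ z) * (1/2)"])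
      have "(\<lambda>z. gP z + gQ z) summable_on UNIV" by (rule summable_on_add[OF gsum[OF gP_def] gsum[OF gQ_def]])
      then show "(\<lambda>z. (gP z + gQ z) * (1/2)) summable_on UNIV" by (rule summable_on_cmult_left)
    next
      fix z :: "nat \<times> unit \<times> 'x"
      obtain i e u where z: "z = (i,(e,u))" by (metis prod.exhaust)
      have "cmod (f z) = cmod (A i (P,e) (Q,e)) * Re (B i u u)"
        unfolding f_def z using psd_diag_real[OF psB, of i u] psd_diag(2)[OF psB, of i u]
        by (simp add: norm_mult) (metis norm_of_real abs_of_nonneg)
      also have "\<dots> \<le> ((Re (A i (P,e) (P,e)) + Re (A i (Q,e) (Q,e))) / 2) * Re (B i u u)"
        by (rule mult_right_mono[OF psd_entry_bound[OF psA] psd_diag(2)[OF psB]])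
      also have "\<dots> = (gP z + gQ z) * (1/2)" unfolding gP_def gQ_def z by (simp add: field_simps)
      finally show "cmod (f z) \<le> (gP z + gQ z) * (1/2)" .
    qed
    show ?thesis
    proof (rule fubini_has_sum[OF fs])
      fix i :: nat
      have "((\<lambda>u. B i u u) has_sum tB i) UNIV" unfolding tB_def using AB(2)[of i] unfolding mixed_memory_psd by (intro has_sum_infsum) blast
      then have h: "((\<lambda>u. A i (P,()) (Q,()) * B i u u) has_sum A i (P,()) (Q,()) * tB i) UNIV"
        by (rule has_sum_cmult_right)
      have bij: "bij_betw (\<lambda>u::'x. ((), u)) UNIV UNIV" by (auto simp: bij_betw_def inj_def)
      have "((\<lambda>u. f (i, ((), u))) has_sum tB i * A i (P,()) (Q,())) UNIV"
        using h unfolding f_def by (simp add: mult.commute)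
      then show "((\<lambda>eu. f (i, eu)) has_sum tB i * A i (P,()) (Q,())) UNIV"
        using has_sum_reindex_bij_betw[OF bij, of "\<lambda>eu. f (i, eu)"] by simp
    next
      fix eu :: "unit \<times> 'x"
      obtain e u where eu: "eu = (e,u)" by (metis prod.exhaust)
      show "((\<lambda>i. f (i, eu)) has_sum (\<lambda>(e, u). \<sigma> ((P, e), u) ((Q, e), u)) eu) UNIV"
        using hs[of "((P,e),u)" "((Q,e),u)"] unfolding f_def eu tensor_op_def by simp
    next
      show "((\<lambda>(e, u). \<sigma> ((P, e), u) ((Q, e), u)) has_sum \<rho> P Q) UNIV" by (rule tr)
    qed
  qed
  show ?thesis
    unfolding separable_def
  proof (intro exI[of _ W] exI[of _ V] conjI allI)
    fix i show "mixed_memory (W i)" by (rule mmW)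
  next
    fix i show "mixed_memory (V i)" by (rule mmV)
  next
    fix p q :: "'x \<times> 'r"
    obtain x r where p: "p = (x,r)" by (metis prod.exhaust)
    obtain x' r' where q: "q = (x',r')" by (metis prod.exhaust)
    have "tensor_op (W i) (V i) p q = tB i * A i (p,()) (q,())" for i
      unfolding p q tensor_op_def using K1 by simp
    then show "((\<lambda>i. tensor_op (W i) (V i) p q) has_sum \<rho> p q) UNIV" using K4 by simp
  qed
qed



lemma single_le_has_sum:
  fixes f :: "'a \<Rightarrow> real"
  assumes "(f has_sum s) A" "\<And>y. y \<in> A \<Longrightarrow> f y \<ge> 0" "x \<in> A"
  shows "f x \<le> s"
proof -
  have "(f has_sum f x) {x}" using has_sum_finite[of "{x}" f] by simp
  then show ?thesis
    by (rule has_sum_mono_neutral[OF _ assms(1)]) (use assms in auto)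
qed

lemma cnj_self: "z * cnj z = of_real ((cmod z)\<^sup>2)"
  by (metis complex_norm_square)

lemma prod_le_avg: "cmod a * cmod b \<le> ((cmod a)\<^sup>2 + (cmod b)\<^sup>2) / 2"
proof -
  have "0 \<le> (cmod a - cmod b)\<^sup>2" by simp
  then show ?thesis by (simp add: power2_eq_square algebra_simps)
qed

lemma chol_countable:
  fixes K :: "'a \<Rightarrow> 'a \<Rightarrow> complex"
  assumes K: "psd K" and tr: "(\<lambda>x. K x x) summable_on UNIV"
  shows "\<exists>c :: nat \<Rightarrow> 'a \<Rightarrow> complex. \<forall>x y. ((\<lambda>k. c k x * cnj (c k y)) has_sum K x y) UNIV"
proof -
  define S where "S = {x. K x x \<noteq> 0}"
  have cS: "countable S" using summable_countable_complex[OF tr] unfolding S_def by simp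
  obtain e :: "nat \<Rightarrow> 'a" where eS: "S \<subseteq> range e"
  proof (cases "S = {}")
    case True then show ?thesis using that[of "\<lambda>_. undefined"] by simp
  next
    case False then show ?thesis using that[of "from_nat_into S"] range_from_nat_into[OF False cS] by simp
  qed
  define R where "R = rec_nat K (\<lambda>n Rn. schur Rn (e n))"
  have R0: "R 0 = K" and RS: "R (Suc n) = schur (R n) (e n)" for n by (simp_all add: R_def)
  define c where "c = (\<lambda>n. schur_vec (R n) (e n))"
  have psR: "psd (R n)" for n
    by (induction n) (simp_all add: R0 RS K psd_schur)
  have dec: "K x y = R n x y + (\<Sum>k<n. c k x * cnj (c k y))" for n x y
  proof (induction n)
    case 0 then show ?case by (simp add: R0)
  next
    case (Suc n)
    have "R n x y = R (Suc n) x y + c n x * cnj (c n y)"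
      unfolding RS c_def by (rule schur_decomp)
    then show ?case using Suc by simp
  qed
  have prop1: "\<forall>y. R (Suc m) x y = 0" if "\<forall>y. R m x y = 0" for m x
  proof
    fix y
    have "c m x = 0" unfolding c_def schur_vec_def using that by simp
    then show "R (Suc m) x y = 0" unfolding RS schur_def using that by (simp add: c_def)
  qed
  have prop2: "\<forall>y. R m' x y = 0" if "\<forall>y. R m x y = 0" "m \<le> m'" for m m' x
    using that(2,1)
  proof (induction m' rule: dec_induct)
    case base then show ?case by simp
  next
    case (step n) then show ?case using prop1 by blast
  qed
  have ev: "\<exists>N. \<forall>m\<ge>N. \<forall>y. R m x y = 0" for x
  proof (cases "x \<in> range e")
    case True
    then obtain n where x: "x = e n" by blast
    have "\<forall>y. R (Suc n) x y = 0" unfolding x RS using schur_zero(1)[OF psR] by blast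
    then show ?thesis using prop2 by blast
  next
    case False
    then have "x \<notin> S" using eS by blast
    then have "K x x = 0" unfolding S_def by simp
    then have "\<forall>y. R 0 x y = 0" unfolding R0 using psd_diag_zero(1)[OF K, of x] by simp
    then show ?thesis using prop2 by blast
  qed
  have bnd: "(\<Sum>k<n. (cmod (c k x))\<^sup>2) \<le> Re (K x x)" for n x
  proof -
    have "Re (K x x) = Re (R n x x) + (\<Sum>k<n. (cmod (c k x))\<^sup>2)"
      using arg_cong[OF dec[of x x n], of Re] by (simp add: cnj_self)
    then show ?thesis using psd_diag(2)[OF psR, of n x] by simp
  qed
  have sumsq: "summable (\<lambda>k. (cmod (c k x))\<^sup>2)" for x
    by (rule summableI_nonneg_bounded[where x="Re (K x x)"]) (use bnd in auto)
  show ?thesis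
  proof (intro exI[of _ c] allI)
    fix x y
    have "summable (\<lambda>k. ((cmod (c k x))\<^sup>2 + (cmod (c k y))\<^sup>2) / 2)"
      using summable_add[OF sumsq[of x] sumsq[of y]] by (intro summable_divide) simp
    then have s: "summable (\<lambda>k. norm (c k x * cnj (c k y)))"
      by (rule summable_comparison_test'[where N=0]) (use prod_le_avg in \<open>simp add: norm_mult\<close>)
    obtain N where N: "\<forall>m\<ge>N. \<forall>y. R m x y = 0" using ev by blast
    have "eventually (\<lambda>n. (\<Sum>k<n. c k x * cnj (c k y)) = K x y) sequentially"
      unfolding eventually_sequentially using N dec[of x y] by (metis add_0)
    then have "(\<lambda>n. \<Sum>k<n. c k x * cnj (c k y)) \<longlonglongrightarrow> K x y" by (rule tendsto_eventually)
    then have "(\<lambda>k. c k x * cnj (c k y)) sums K x y" unfolding sums_def .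
    then show "((\<lambda>k. c k x * cnj (c k y)) has_sum K x y) UNIV"
      by (rule norm_summable_imp_has_sum[OF s])
  qed
qed

lemma chol_diag:
  assumes "((\<lambda>k. c k x * cnj (c k x)) has_sum K x x) UNIV"
  shows "((\<lambda>k. (cmod (c k x))\<^sup>2) has_sum Re (K x x)) UNIV"
  using has_sum_Re[OF assms] by (simp add: cnj_self)



lemma ell2_point_le:
  assumes "is_ell2 f" shows "cmod (f z) \<le> ell2_norm f"
proof -
  have "((\<lambda>x. (cmod (f x))\<^sup>2) has_sum infsum (\<lambda>x. (cmod (f x))\<^sup>2) UNIV) UNIV"
    using assms unfolding is_ell2_def by (rule has_sum_infsum)
  then have "(cmod (f z))\<^sup>2 \<le> infsum (\<lambda>x. (cmod (f x))\<^sup>2) UNIV"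
    by (rule single_le_has_sum) auto
  then show ?thesis unfolding ell2_norm_def by (rule real_le_rsqrt)
qed

lemma is_ell2_diff:
  assumes "is_ell2 f" "is_ell2 g" shows "is_ell2 (\<lambda>x. f x - g x)"
  unfolding is_ell2_def
proof (rule summable_on_comparison_test)
  show "(\<lambda>x. 2 * (cmod (f x))\<^sup>2 + 2 * (cmod (g x))\<^sup>2) summable_on UNIV"
    using assms unfolding is_ell2_def
    by (intro summable_on_add summable_on_cmult_right) auto
next
  fix x
  have "cmod (f x - g x) \<le> cmod (f x) + cmod (g x)" by (rule norm_triangle_ineq4)
  then have "(cmod (f x - g x))\<^sup>2 \<le> (cmod (f x) + cmod (g x))\<^sup>2" by (rule power_mono) simp
  also have "\<dots> \<le> 2 * (cmod (f x))\<^sup>2 + 2 * (cmod (g x))\<^sup>2"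
  proof -
    have "0 \<le> (cmod (f x) - cmod (g x))\<^sup>2" by simp
    then show ?thesis by (simp add: power2_eq_square algebra_simps)
  qed
  finally show "(cmod (f x - g x))\<^sup>2 \<le> 2 * (cmod (f x))\<^sup>2 + 2 * (cmod (g x))\<^sup>2" .
qed simp

lemma closure_inv:
  assumes phi: "\<phi> \<in> ell2_closure S" and S: "\<And>\<psi>. \<psi> \<in> S \<Longrightarrow> \<psi> (g a) = \<psi> a \<and> is_ell2 \<psi>"
  shows "\<phi> (g a) = \<phi> a"
proof (rule ccontr)
  assume ne: "\<phi> (g a) \<noteq> \<phi> a"
  define d where "d = cmod (\<phi> (g a) - \<phi> a)"
  have d: "d > 0" using ne d_def by simp
  have ell: "is_ell2 \<phi>" using phi unfolding ell2_closure_def by blast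
  have all: "\<forall>\<epsilon>>0. \<exists>\<psi>\<in>S. ell2_norm (\<lambda>x. \<phi> x - \<psi> x) < \<epsilon>"
    using phi unfolding ell2_closure_def by blast
  have "d/3 > 0" using d by simp
  then obtain \<psi> where \<psi>: "\<psi> \<in> S" "ell2_norm (\<lambda>x. \<phi> x - \<psi> x) < d/3"
    using all by blast
  have ell': "is_ell2 (\<lambda>x. \<phi> x - \<psi> x)" using is_ell2_diff[OF ell] S[OF \<psi>(1)] by blast
  have 1: "cmod (\<phi> (g a) - \<psi> (g a)) < d/3"
    using ell2_point_le[OF ell', of "g a"] \<psi>(2) by simp
  have 2: "cmod (\<phi> a - \<psi> a) < d/3"
    using ell2_point_le[OF ell', of a] \<psi>(2) by simp
  have "\<phi> (g a) - \<phi> a = (\<phi> (g a) - \<psi> (g a)) - (\<phi> a - \<psi> a)" using S[OF \<psi>(1)] by simp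
  then have "d \<le> cmod (\<phi> (g a) - \<psi> (g a)) + cmod (\<phi> a - \<psi> a)"
    unfolding d_def by (metis norm_triangle_ineq4)
  then show False using 1 2 d by simp
qed

lemma op_apply_ell2:
  assumes mm: "mixed_memory K" and psi: "is_ell2 \<psi>"
  shows "is_ell2 (op_apply K \<psi>)"
proof -
  have p: "psd K" using mm mixed_memory_psd by blast
  define D where "D = (\<lambda>b. Re (K b b))"
  have D0: "D b \<ge> 0" for b using psd_diag(2)[OF p] D_def by simp
  have Ds: "D summable_on UNIV" unfolding D_def by (rule mm_diag_Re_summable[OF mm])
  have Kb: "cmod (K a b) \<le> sqrt (D a) * sqrt (D b)" for a b
  proof -
    have "cmod (K a b) \<le> sqrt (D a * D b)" using psd_cs[OF p, of a b] unfolding D_def by (rule real_le_rsqrt)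
    then show ?thesis by (simp add: real_sqrt_mult)
  qed
  have amgm: "sqrt (D b) * cmod (\<psi> b) \<le> (D b + (cmod (\<psi> b))\<^sup>2) / 2" for b
  proof -
    have "0 \<le> (sqrt (D b) - cmod (\<psi> b))\<^sup>2" by simp
    moreover have "(sqrt (D b))\<^sup>2 = D b" using D0 by simp
    ultimately show ?thesis by (simp add: power2_eq_square algebra_simps)
  qed
  have hs: "(\<lambda>b. sqrt (D b) * cmod (\<psi> b)) summable_on UNIV"
  proof (rule summable_on_comparison_test)
    have "(\<lambda>b. D b + (cmod (\<psi> b))\<^sup>2) summable_on UNIV"
      by (rule summable_on_add[OF Ds psi[unfolded is_ell2_def]])
    then show "(\<lambda>b. (D b + (cmod (\<psi> b))\<^sup>2) * (1/2)) summable_on UNIV"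
      by (rule summable_on_cmult_left)
  next
    fix b show "sqrt (D b) * cmod (\<psi> b) \<le> (D b + (cmod (\<psi> b))\<^sup>2) * (1/2)" using amgm[of b] by simp
  next
    fix b show "0 \<le> sqrt (D b) * cmod (\<psi> b)" using D0[of b] by simp
  qed
  define C where "C = infsum (\<lambda>b. sqrt (D b) * cmod (\<psi> b)) UNIV"
  have C0: "C \<ge> 0" unfolding C_def using D0 by (intro infsum_nonneg) auto
  have pt: "cmod (op_apply K \<psi> a) \<le> sqrt (D a) * C" for a
  proof -
    have dom: "cmod (K a b * \<psi> b) \<le> sqrt (D a) * (sqrt (D b) * cmod (\<psi> b))" for b
      using mult_right_mono[OF Kb[of a b] norm_ge_zero[of "\<psi> b"]] by (simp add: norm_mult mult_ac)
    have s2: "(\<lambda>b. sqrt (D a) * (sqrt (D b) * cmod (\<psi> b))) summable_on UNIV"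
      by (rule summable_on_cmult_right[OF hs])
    have s1: "(\<lambda>b. cmod (K a b * \<psi> b)) summable_on UNIV"
      by (rule summable_on_comparison_test[OF s2]) (use dom in auto)
    have "cmod (op_apply K \<psi> a) \<le> infsum (\<lambda>b. cmod (K a b * \<psi> b)) UNIV"
      unfolding op_apply_def by (rule norm_infsum_bound) (use s1 in simp)
    also have "\<dots> \<le> infsum (\<lambda>b. sqrt (D a) * (sqrt (D b) * cmod (\<psi> b))) UNIV"
      by (rule infsum_mono[OF s1 s2 dom])
    also have "\<dots> = sqrt (D a) * C" unfolding C_def by (rule infsum_cmult_right) (rule hs)
    finally show ?thesis .
  qed
  show ?thesis
    unfolding is_ell2_def
  proof (rule summable_on_comparison_test)
    show "(\<lambda>a. D a * C\<^sup>2) summable_on UNIV" by (rule summable_on_cmult_left[OF Ds])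
  next
    fix a
    have "(cmod (op_apply K \<psi> a))\<^sup>2 \<le> (sqrt (D a) * C)\<^sup>2" by (rule power_mono[OF pt]) simp
    also have "\<dots> = D a * C\<^sup>2" using D0 by (simp add: power_mult_distrib)
    finally show "(cmod (op_apply K \<psi> a))\<^sup>2 \<le> D a * C\<^sup>2" .
  qed simp
qed



lemma bij_unit: "bij_betw (\<lambda>p. (p, ())) UNIV (UNIV :: ('a \<times> unit) set)"
  by (auto simp: bij_betw_def inj_def image_def)

lemma bij_unit2: "bij_betw (\<lambda>u. ((), u)) UNIV (UNIV :: (unit \<times> 'a) set)"
  by (auto simp: bij_betw_def inj_def image_def)

lemma has_sum_unit1:
  "(f has_sum s) (UNIV :: ('a \<times> unit) set) \<longleftrightarrow> ((\<lambda>p. f (p, ())) has_sum s) UNIV"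
  using has_sum_reindex_bij_betw[OF bij_unit, of f s] by simp

lemma has_sum_unit2:
  "(f has_sum s) (UNIV :: (unit \<times> 'a) set) \<longleftrightarrow> ((\<lambda>u. f ((), u)) has_sum s) UNIV"
  using has_sum_reindex_bij_betw[OF bij_unit2, of f s] by simp

lemma summable_unit1:
  "f summable_on (UNIV :: ('a \<times> unit) set) \<longleftrightarrow> (\<lambda>p. f (p, ())) summable_on UNIV"
  using summable_on_reindex_bij_betw[OF bij_unit, of f] by simp

lemma four_bound:
  fixes a b c d :: real
  assumes "0 \<le> p" "p \<le> (a + b)/2" "0 \<le> q" "q \<le> (c + d)/2" "0 \<le> a" "0 \<le> b" "0 \<le> c" "0 \<le> d"
  shows "p * q \<le> (a*c + a*d + b*c + b*d) / 4"
proof -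
  have "p * q \<le> ((a + b)/2) * ((c + d)/2)" by (rule mult_mono) (use assms in auto)
  also have "\<dots> = (a*c + a*d + b*c + b*d) / 4" by (simp add: field_simps)
  finally show ?thesis .
qed

lemma dir1:
  fixes \<rho> :: "'x \<times> 'r \<Rightarrow> 'x \<times> 'r \<Rightarrow> complex"
  assumes mm\<rho>: "mixed_memory \<rho>" and sep: "separable \<rho>"
  shows "qsat \<rho> (separable_pred :: ((('x \<times> 'r) \<times> unit) \<times> 'x \<Rightarrow> complex) set)"
proof -
  from sep obtain \<rho>s :: "nat \<Rightarrow> 'x \<Rightarrow> 'x \<Rightarrow> complex" and \<rho>s' :: "nat \<Rightarrow> 'r \<Rightarrow> 'r \<Rightarrow> complex" where
    mm1: "\<And>i. mixed_memory (\<rho>s i)" and mm2: "\<And>i. mixed_memory (\<rho>s' i)"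
    and hs: "\<And>p q. ((\<lambda>i. tensor_op (\<rho>s i) (\<rho>s' i) p q) has_sum \<rho> p q) UNIV"
    unfolding separable_def by blast
  have pA: "psd (\<rho>s i)" for i using mm1 mixed_memory_psd by blast
  have pB: "psd (\<rho>s' i)" for i using mm2 mixed_memory_psd by blast
  have p\<rho>: "psd \<rho>" using mm\<rho> mixed_memory_psd by blast
  have "\<forall>i. \<exists>c :: nat \<Rightarrow> 'x \<Rightarrow> complex. \<forall>x y. ((\<lambda>k. c k x * cnj (c k y)) has_sum \<rho>s i x y) UNIV"
    using chol_countable[OF pA] mm1 mixed_memory_psd by blast
  then obtain c :: "nat \<Rightarrow> nat \<Rightarrow> 'x \<Rightarrow> complex" where
    ch: "\<And>i x y. ((\<lambda>k. c i k x * cnj (c i k y)) has_sum \<rho>s i x y) UNIV"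
    using choice[of "\<lambda>i c. \<forall>x y. ((\<lambda>k. c k x * cnj (c k y)) has_sum \<rho>s i x y) UNIV"] by blast
  have chd: "((\<lambda>k. (cmod (c i k x))\<^sup>2) has_sum Re (\<rho>s i x x)) UNIV" for i x
    by (rule chol_diag[where c="c i" and K="\<rho>s i", OF ch[of i x x]])
  have cle: "(cmod (c i k x))\<^sup>2 \<le> Re (\<rho>s i x x)" for i k x
    by (rule single_le_has_sum[OF chd]) auto
  have csum: "(\<lambda>u. (cmod (c i k u))\<^sup>2) summable_on UNIV" for i k
    by (rule summable_on_comparison_test[OF mm_diag_Re_summable[OF mm1[of i]]]) (use cle in auto)
  define N where "N = (\<lambda>i k. infsum (\<lambda>u. (cmod (c i k u))\<^sup>2) UNIV)"
  have hN: "((\<lambda>u. (cmod (c i k u))\<^sup>2) has_sum N i k) UNIV" for i k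
    unfolding N_def using csum by simp
  have N0: "N i k \<ge> 0" for i k using has_sum_nonneg[OF hN] by simp
  have cN: "(cmod (c i k u))\<^sup>2 \<le> N i k" for i k u
    by (rule single_le_has_sum[OF hN]) auto
  have cc: "(1 / N i k) * (cmod (c i k u) * cmod (c i k u')) \<le> 1" for i k u u'
  proof (cases "N i k = 0")
    case True then show ?thesis by simp
  next
    case False
    then have Np: "N i k > 0" using N0[of i k] by simp
    have "cmod (c i k u) * cmod (c i k u') \<le> ((cmod (c i k u))\<^sup>2 + (cmod (c i k u'))\<^sup>2) / 2"
      by (rule prod_le_avg)
    also have "\<dots> \<le> N i k" using cN[of i k u] cN[of i k u'] by simp
    finally show ?thesis using Np by (simp add: field_simps)
  qed
  have cN0: "c i k u = 0" if "N i k = 0" for i k u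
    using cN[of i k u] that by simp
  define X where "X = (\<lambda>i k (a::('x \<times> 'r) \<times> unit) (b::('x \<times> 'r) \<times> unit).
      tensor_op (\<lambda>x y. c i k x * cnj (c i k y)) (\<rho>s' i) (fst a) (fst b))"
  define U where "U = (\<lambda>i k (u::'x) (u'::'x). of_real (1 / N i k) * (c i k u * cnj (c i k u')))"
  define t where "t = (\<lambda>(ik::nat \<times> nat) a b. tensor_op (X (fst ik) (snd ik)) (U (fst ik) (snd ik)) a b)"
  have t_eq: "t (i,k) (((x,r),e),u) (((x',r'),e'),u') =
      c i k x * cnj (c i k x') * \<rho>s' i r r' * (of_real (1 / N i k) * (c i k u * cnj (c i k u')))"
    for i k x r e u x' r' e' u'
    unfolding t_def X_def U_def tensor_op_def by simp
  define D where "D = (\<lambda>x r (ik::nat \<times> nat). (cmod (c (fst ik) (snd ik) x))\<^sup>2 * Re (\<rho>s' (fst ik) r r))"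
  have D0: "D x r ik \<ge> 0" for x r ik unfolding D_def using psd_diag(2)[OF pB] by simp
  have Dsum: "(D x r has_sum Re (\<rho> (x,r) (x,r))) UNIV" for x r
  proof -
    have inner: "((\<lambda>k. D x r (i,k)) has_sum Re (\<rho>s i x x) * Re (\<rho>s' i r r)) (UNIV :: nat set)" for i
      unfolding D_def using has_sum_cmult_left[OF chd[of i x]] by simp
    have outer: "((\<lambda>i. Re (\<rho>s i x x) * Re (\<rho>s' i r r)) has_sum Re (\<rho> (x,r) (x,r))) UNIV"
    proof -
      have "((\<lambda>i. Re (tensor_op (\<rho>s i) (\<rho>s' i) (x,r) (x,r))) has_sum Re (\<rho> (x,r) (x,r))) UNIV"
        by (rule has_sum_Re[OF hs])
      moreover have "Re (tensor_op (\<rho>s i) (\<rho>s' i) (x,r) (x,r)) = Re (\<rho>s i x x) * Re (\<rho>s' i r r)" for i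
        unfolding tensor_op_def using psd_diag(1)[OF pA, of i x] psd_diag(1)[OF pB, of i r] by simp
      ultimately show ?thesis by simp
    qed
    have summ: "D x r summable_on Sigma UNIV (\<lambda>_. UNIV)"
      by (rule summable_on_SigmaI[where g="\<lambda>i. Re (\<rho>s i x x) * Re (\<rho>s' i r r)"])
         (use inner outer has_sum_imp_summable D0 in auto)
    have "(D x r has_sum Re (\<rho> (x,r) (x,r))) (Sigma UNIV (\<lambda>_. UNIV))"
      by (rule has_sum_SigmaI[OF _ outer summ]) (use inner in simp)
    then show ?thesis by simp
  qed
  define G where "G = (\<lambda>x r x' r' ik. (D x r ik + D x r' ik + D x' r ik + D x' r' ik) / 4)"
  have G0: "G x r x' r' ik \<ge> 0" for x r x' r' ik unfolding G_def using D0 by (simp add: add_nonneg_nonneg)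
  have Gsum: "G x r x' r' summable_on UNIV" for x r x' r'
  proof -
    have "(\<lambda>ik. D x r ik + D x r' ik + D x' r ik + D x' r' ik) summable_on UNIV"
      using Dsum has_sum_imp_summable by (intro summable_on_add) blast+
    then have "(\<lambda>ik. (D x r ik + D x r' ik + D x' r ik + D x' r' ik) * (1/4)) summable_on UNIV"
      by (rule summable_on_cmult_left)
    then show ?thesis unfolding G_def by simp
  qed
  have cxr: "cmod (c i k x) * cmod (c i k x') * cmod (\<rho>s' i r r') \<le> G x r x' r' (i,k)" for i k x x' r r'
    unfolding G_def D_def fst_conv snd_conv
    by (rule four_bound[OF _ prod_le_avg _ psd_entry_bound[OF pB]]) (use psd_diag(2)[OF pB] in auto)
  have tb: "cmod (t (i,k) (((x,r),e),u) (((x',r'),e'),u')) \<le> G x r x' r' (i,k)" for i k x r e u x' r' e' u'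
  proof -
    have "cmod (t (i,k) (((x,r),e),u) (((x',r'),e'),u')) =
        (cmod (c i k x) * cmod (c i k x') * cmod (\<rho>s' i r r')) * ((1 / N i k) * (cmod (c i k u) * cmod (c i k u')))"
      unfolding t_eq using N0[of i k] by (simp add: norm_mult norm_divide)
    also have "\<dots> \<le> (cmod (c i k x) * cmod (c i k x') * cmod (\<rho>s' i r r')) * 1"
      by (rule mult_left_mono[OF cc]) simp
    also have "\<dots> \<le> G x r x' r' (i,k)" using cxr by simp
    finally show ?thesis .
  qed
  have tsum: "(\<lambda>ik. t ik a b) summable_on UNIV" for a b
  proof -
    obtain x r e u where a: "a = (((x,r),e),u)" by (metis prod.exhaust)
    obtain x' r' e' u' where b: "b = (((x',r'),e'),u')" by (metis prod.exhaust)
    show ?thesis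
    proof (rule dom_summable[OF Gsum[of x r x' r']])
      fix ik :: "nat \<times> nat"
      obtain i k where ik: "ik = (i,k)" by (metis prod.exhaust)
      show "cmod (t ik a b) \<le> G x r x' r' ik" unfolding a b ik by (rule tb)
    qed
  qed
  define \<sigma> where "\<sigma> = (\<lambda>a b. infsum (\<lambda>ik. t ik a b) UNIV)"
  have h\<sigma>: "((\<lambda>ik. t ik a b) has_sum \<sigma> a b) UNIV" for a b
    unfolding \<sigma>_def using tsum by simp
  define Xs where "Xs = (\<lambda>n. X (fst (prod_decode n)) (snd (prod_decode n)))"
  define Us where "Us = (\<lambda>n. U (fst (prod_decode n)) (snd (prod_decode n)))"
  have tn: "tensor_op (Xs n) (Us n) a b = t (prod_decode n) a b" for n a b
    unfolding Xs_def Us_def t_def by simp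
  have hsn: "((\<lambda>n. tensor_op (Xs n) (Us n) a b) has_sum \<sigma> a b) UNIV" for a b
    unfolding tn using has_sum_reindex_bij_betw[OF bij_prod_decode, of "\<lambda>ik. t ik a b"] h\<sigma> by simp
  have psdX: "psd (X i k)" for i k
  proof -
    have inj: "inj (fst :: ('x\<times>'r)\<times>unit \<Rightarrow> 'x\<times>'r)" by (auto simp: inj_def)
    show ?thesis unfolding X_def by (rule psd_inj[OF psd_tensor[OF psd_rank1 pB] inj])
  qed
  have psdU: "psd (U i k)" for i k
    unfolding U_def by (rule psd_scale[OF psd_rank1]) (simp add: N0)
  have mmX: "mixed_memory (X i k)" for i k
  proof -
    define g where "g = (\<lambda>p::'x \<times> 'r. (cmod (c i k (fst p)))\<^sup>2 * Re (\<rho>s' i (snd p) (snd p)))"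
    have gs: "g summable_on UNIV"
    proof (rule nonneg_summable_prod[where G="\<lambda>x. (cmod (c i k x))\<^sup>2 * Re (infsum (\<lambda>r. \<rho>s' i r r) UNIV)"])
      fix z show "g z \<ge> 0" unfolding g_def using psd_diag(2)[OF pB] by simp
    next
      fix x show "((\<lambda>r. g (x, r)) has_sum (cmod (c i k x))\<^sup>2 * Re (infsum (\<lambda>r. \<rho>s' i r r) UNIV)) UNIV"
        unfolding g_def using has_sum_cmult_right[OF mm_diag_Re_has_sum[OF mm2[of i]]] by simp
    next
      show "(\<lambda>x. (cmod (c i k x))\<^sup>2 * Re (infsum (\<lambda>r. \<rho>s' i r r) UNIV)) summable_on UNIV"
        by (rule summable_on_cmult_left[OF csum])
    qed
    have "(\<lambda>p. X i k (p,()) (p,())) summable_on UNIV"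
    proof (rule dom_summable[OF gs])
      fix p :: "'x \<times> 'r"
      obtain x r where p: "p = (x,r)" by (metis prod.exhaust)
      have "cmod (\<rho>s' i r r) = Re (\<rho>s' i r r)"
        using psd_diag_real[OF pB, of i r] psd_diag(2)[OF pB, of i r] by (metis abs_of_nonneg norm_of_real)
      then show "cmod (X i k (p,()) (p,())) \<le> g p"
        unfolding X_def g_def p tensor_op_def by (simp add: norm_mult power2_eq_square)
    qed
    then have "(\<lambda>a. X i k a a) summable_on UNIV" unfolding summable_unit1 .
    then show ?thesis using psdX mixed_memory_psd by blast
  qed
  have mmU: "mixed_memory (U i k)" for i k
  proof -
    have "(\<lambda>u. of_real ((1 / N i k) * (cmod (c i k u))\<^sup>2) :: complex) summable_on UNIV"
      by (rule summable_on_of_real[OF summable_on_cmult_right[OF csum]])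
    moreover have "U i k u u = of_real ((1 / N i k) * (cmod (c i k u))\<^sup>2)" for u
      unfolding U_def by (simp add: cnj_self)
    ultimately have "(\<lambda>u. U i k u u) summable_on UNIV" by simp
    then show ?thesis using psdU mixed_memory_psd by blast
  qed
  have sep\<sigma>: "separable \<sigma>"
    unfolding separable_def
  proof (intro exI[of _ Xs] exI[of _ Us] conjI allI)
    fix n show "mixed_memory (Xs n)" unfolding Xs_def by (rule mmX)
  next
    fix n show "mixed_memory (Us n)" unfolding Us_def by (rule mmU)
  next
    fix p q show "((\<lambda>i. tensor_op (Xs i) (Us i) p q) has_sum \<sigma> p q) UNIV" by (rule hsn)
  qed
  have ps\<sigma>: "psd \<sigma>"
  proof (rule psd_limit[where T="\<lambda>n. tensor_op (Xs n) (Us n)"])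
    fix n show "psd (tensor_op (Xs n) (Us n))" unfolding Xs_def Us_def by (rule psd_tensor[OF psdX psdU])
  next
    fix p q show "((\<lambda>n. tensor_op (Xs n) (Us n) p q) has_sum \<sigma> p q) UNIV" by (rule hsn)
  qed
  have tr\<sigma>: "((\<lambda>(e,u). \<sigma> ((P,e),u) ((Q,e),u)) has_sum \<rho> P Q) UNIV" for P Q
  proof -
    obtain x r where P: "P = (x,r)" by (metis prod.exhaust)
    obtain x' r' where Q: "Q = (x',r')" by (metis prod.exhaust)
    define f where "f = (\<lambda>(eu::unit \<times> 'x, ik::nat\<times>nat). t ik ((P, fst eu), snd eu) ((Q, fst eu), snd eu))"
    define kk where "kk = (\<lambda>ik::nat\<times>nat. c (fst ik) (snd ik) x * cnj (c (fst ik) (snd ik) x') * \<rho>s' (fst ik) r r')"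
    define g where "g = (\<lambda>(eu::unit\<times>'x, ik::nat\<times>nat). G x r x' r' ik * ((1 / N (fst ik) (snd ik)) * (cmod (c (fst ik) (snd ik) (snd eu)))\<^sup>2))"
    have gsum: "g summable_on UNIV"
    proof (rule nonneg_summable_prod'[where G="\<lambda>ik. G x r x' r' ik * ((1 / N (fst ik) (snd ik)) * N (fst ik) (snd ik))"])
      fix z :: "(unit \<times> 'x) \<times> (nat \<times> nat)"
      show "g z \<ge> 0" unfolding g_def using G0 N0 by (auto split: prod.splits)
    next
      fix ik :: "nat \<times> nat"
      obtain i k where ik: "ik = (i,k)" by (metis prod.exhaust)
      have "((\<lambda>u. G x r x' r' ik * ((1 / N i k) * (cmod (c i k u))\<^sup>2)) has_sum G x r x' r' ik * ((1 / N i k) * N i k)) UNIV"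
        by (intro has_sum_cmult_right hN)
      then show "((\<lambda>eu. g (eu, ik)) has_sum G x r x' r' ik * ((1 / N (fst ik) (snd ik)) * N (fst ik) (snd ik))) UNIV"
        unfolding has_sum_unit2 g_def ik by simp
    next
      show "(\<lambda>ik. G x r x' r' ik * ((1 / N (fst ik) (snd ik)) * N (fst ik) (snd ik))) summable_on UNIV"
      proof (rule summable_on_comparison_test[OF Gsum[of x r x' r']])
        fix ik :: "nat \<times> nat"
        have "(1 / N (fst ik) (snd ik)) * N (fst ik) (snd ik) \<le> 1" by (cases "N (fst ik) (snd ik) = 0") auto
        then show "G x r x' r' ik * ((1 / N (fst ik) (snd ik)) * N (fst ik) (snd ik)) \<le> G x r x' r' ik"
          using G0[of x r x' r' ik] by (simp add: mult_left_le)
        show "0 \<le> G x r x' r' ik * ((1 / N (fst ik) (snd ik)) * N (fst ik) (snd ik))"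
          using G0[of x r x' r' ik] N0 by simp
      qed
    qed
    have fsum: "f summable_on UNIV"
    proof (rule dom_summable[OF gsum])
      fix z :: "(unit \<times> 'x) \<times> (nat \<times> nat)"
      obtain e u i k where z: "z = ((e,u),(i,k))" by (metis prod.exhaust)
      have "cmod (f z) = (cmod (c i k x) * cmod (c i k x') * cmod (\<rho>s' i r r')) * ((1 / N i k) * (cmod (c i k u))\<^sup>2)"
        unfolding f_def z P Q using t_eq N0[of i k] by (simp add: norm_mult norm_divide power2_eq_square abs_of_nonneg)
      also have "\<dots> \<le> G x r x' r' (i,k) * ((1 / N i k) * (cmod (c i k u))\<^sup>2)"
        by (rule mult_right_mono[OF cxr]) (use N0 in simp)
      also have "\<dots> = g z" unfolding g_def z by simp
      finally show "cmod (f z) \<le> g z" .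
    qed
    define h where "h = (\<lambda>eu::unit \<times> 'x. \<sigma> ((P, fst eu), snd eu) ((Q, fst eu), snd eu))"
    have "(h has_sum \<rho> P Q) UNIV"
    proof (rule fubini_has_sum[OF fsum, where k=kk])
      fix eu :: "unit \<times> 'x"
      show "((\<lambda>ik. f (eu, ik)) has_sum h eu) UNIV" unfolding f_def h_def by (simp add: h\<sigma>)
    next
      fix ik :: "nat \<times> nat"
      obtain i k where ik: "ik = (i,k)" by (metis prod.exhaust)
      define C where "C = c i k x * cnj (c i k x') * \<rho>s' i r r'"
      have "((\<lambda>u. of_real ((cmod (c i k u))\<^sup>2) :: complex) has_sum of_real (N i k)) UNIV"
        by (rule has_sum_of_real[OF hN])
      then have A: "((\<lambda>u. C * (of_real (1 / N i k) * of_real ((cmod (c i k u))\<^sup>2))) has_sum C * (of_real (1 / N i k) * of_real (N i k))) UNIV"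
        by (intro has_sum_cmult_right)
      have B: "C * (of_real (1 / N i k) * of_real (N i k)) = C"
      proof (cases "N i k = 0")
        case True then show ?thesis unfolding C_def using cN0 by simp
      qed simp
      from A have "((\<lambda>u. C * (of_real (1 / N i k) * of_real ((cmod (c i k u))\<^sup>2))) has_sum C) UNIV"
        unfolding B .
      moreover have "f (((),u), ik) = C * (of_real (1 / N i k) * of_real ((cmod (c i k u))\<^sup>2))" for u
        unfolding f_def ik P Q C_def using t_eq by (simp add: cnj_self)
      ultimately show "((\<lambda>eu. f (eu, ik)) has_sum kk ik) UNIV"
        unfolding has_sum_unit2 kk_def ik C_def by simp
    next
      have inner: "((\<lambda>k. kk (i,k)) has_sum \<rho>s i x x' * \<rho>s' i r r') UNIV" for i
        unfolding kk_def using has_sum_cmult_left[OF ch[of i x x']] by simp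
      have outer: "((\<lambda>i. \<rho>s i x x' * \<rho>s' i r r') has_sum \<rho> P Q) UNIV"
        using hs[of P Q] unfolding P Q tensor_op_def by simp
      have ks: "kk summable_on Sigma UNIV (\<lambda>_. UNIV)"
      proof -
        have "kk summable_on UNIV"
        proof (rule dom_summable[OF Gsum[of x r x' r']])
          fix ik :: "nat \<times> nat"
          obtain i k where ik: "ik = (i,k)" by (metis prod.exhaust)
          show "cmod (kk ik) \<le> G x r x' r' ik" unfolding kk_def ik using cxr by (simp add: norm_mult)
        qed
        then show ?thesis by simp
      qed
      have "(kk has_sum \<rho> P Q) (Sigma UNIV (\<lambda>_. UNIV))"
        by (rule has_sum_SigmaI[OF _ outer ks]) (use inner in simp)
      then show "(kk has_sum \<rho> P Q) UNIV" by simp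
    qed
    moreover have "(\<lambda>(e,u). \<sigma> ((P,e),u) ((Q,e),u)) = h" by (auto simp: fun_eq_iff h_def)
    ultimately show ?thesis by simp
  qed
  have rs: "(\<lambda>a. Re (\<sigma> a a)) summable_on UNIV"
  proof (rule nonneg_summable_prod[where G="\<lambda>pe. Re (\<rho> (fst pe) (fst pe))"])
    fix z show "Re (\<sigma> z z) \<ge> 0" by (rule psd_diag(2)[OF ps\<sigma>])
  next
    fix pe :: "('x \<times> 'r) \<times> unit"
    obtain P e where pe: "pe = (P,e)" by (metis prod.exhaust)
    have "((\<lambda>eu. Re ((\<lambda>(e,u). \<sigma> ((P,e),u) ((P,e),u)) eu)) has_sum Re (\<rho> P P)) UNIV"
      by (rule has_sum_Re[OF tr\<sigma>])
    then have "((\<lambda>u. Re (\<sigma> ((P,()),u) ((P,()),u))) has_sum Re (\<rho> P P)) UNIV"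
      unfolding has_sum_unit2 by simp
    then show "((\<lambda>u. Re (\<sigma> (pe, u) (pe, u))) has_sum Re (\<rho> (fst pe) (fst pe))) UNIV"
      unfolding pe by simp
  next
    show "(\<lambda>pe. Re (\<rho> (fst pe) (fst pe))) summable_on (UNIV :: (('x \<times> 'r) \<times> unit) set)"
      unfolding summable_unit1 using mm_diag_Re_summable[OF mm\<rho>] by simp
  qed
  have ds: "(\<lambda>a. \<sigma> a a) summable_on UNIV"
  proof (rule dom_summable[OF rs])
    fix a
    show "cmod (\<sigma> a a) \<le> Re (\<sigma> a a)"
      using psd_diag_real[OF ps\<sigma>, of a] psd_diag(2)[OF ps\<sigma>, of a] by (metis abs_of_nonneg norm_of_real order_refl)
  qed
  have mm\<sigma>: "mixed_memory \<sigma>" using ps\<sigma> ds mixed_memory_psd by blast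
  have rowinv: "\<sigma> (((u,r),e),x) b = \<sigma> (((x,r),e),u) b" for u r e x b
  proof -
    obtain x' r' e' u' where b: "b = (((x',r'),e'),u')" by (metis prod.exhaust)
    show ?thesis unfolding \<sigma>_def b
    proof (rule infsum_cong)
      fix ik :: "nat \<times> nat"
      obtain i k where ik: "ik = (i,k)" by (metis prod.exhaust)
      show "t ik (((u,r),e),x) (((x',r'),e'),u') = t ik (((x,r),e),u) (((x',r'),e'),u')"
        unfolding ik t_eq by (simp add: mult_ac)
    qed
  qed
  define sw :: "((('x \<times> 'r) \<times> unit) \<times> 'x) \<Rightarrow> ((('x \<times> 'r) \<times> unit) \<times> 'x)"
    where "sw = (\<lambda>(((x,r),e),u). (((u,r),e),x))"
  have Sinv: "\<psi>' (sw a) = \<psi>' a \<and> is_ell2 \<psi>'" if mem: "\<psi>' \<in> {op_apply \<sigma> \<psi> |\<psi>. is_ell2 \<psi>}" for \<psi>' a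
  proof -
    obtain \<psi> where \<psi>: "\<psi>' = op_apply \<sigma> \<psi>" "is_ell2 \<psi>" using mem by blast
    obtain x r e u where a: "a = (((x,r),e),u)" by (metis prod.exhaust)
    have "\<psi>' (sw a) = \<psi>' a" unfolding \<psi>(1) op_apply_def sw_def a using rowinv by simp
    moreover have "is_ell2 \<psi>'" unfolding \<psi>(1) by (rule op_apply_ell2[OF mm\<sigma> \<psi>(2)])
    ultimately show ?thesis by blast
  qed
  have supp: "supp \<sigma> \<subseteq> separable_pred"
  proof
    fix \<phi> assume "\<phi> \<in> supp \<sigma>"
    then have cl: "\<phi> \<in> ell2_closure {op_apply \<sigma> \<psi> |\<psi>. is_ell2 \<psi>}" unfolding supp_def .
    then have ell: "is_ell2 \<phi>" unfolding ell2_closure_def by blast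
    have "swap_Xu \<phi> = \<phi>"
    proof
      fix a :: "(('x \<times> 'r) \<times> unit) \<times> 'x"
      obtain x r e u where a: "a = (((x,r),e),u)" by (metis prod.exhaust)
      have "\<phi> (sw a) = \<phi> a" by (rule closure_inv[OF cl Sinv])
      then show "swap_Xu \<phi> a = \<phi> a" unfolding swap_Xu_def sw_def a by simp
    qed
    then show "\<phi> \<in> separable_pred" unfolding separable_pred_def using ell by blast
  qed
  show ?thesis
    unfolding qsat_def
  proof (intro exI[of _ \<sigma>] conjI mm\<sigma> sep\<sigma> supp allI)
    fix p p' show "((\<lambda>(e, u). \<sigma> ((p, e), u) ((p', e), u)) has_sum \<rho> p p') UNIV" by (rule tr\<sigma>)
  qed
qed


theorem lemma7:
  fixes \<rho> :: "'x \<times> 'r \<Rightarrow> 'x \<times> 'r \<Rightarrow> complex"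
  assumes "mixed_memory \<rho>"
  shows "qsat \<rho> (separable_pred :: ((('x \<times> 'r) \<times> unit) \<times> 'x \<Rightarrow> complex) set)
           \<longleftrightarrow> separable \<rho>"
  using dir1[OF assms] dir2 by blast

end
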